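(* Fix integers $d\geq1$ and, for $1\leq i\leq d$, $k_i\geq1$, a connected graph $F_i$ on $[k_i]$, and bounded measurable $\phi_i:\mathcal{D}_{k_i}\to\mathbb{R}$, $\psi_i:[0,1]^{k_i}\to\mathbb{R}$; fix a graphon $\kappa$ and a constant $B$. For each $n\geq1$ let $U=(U_1,\dots,U_n)$ be independent $[0,1]$-valued random variables and $(Y_{vw})_{1\leq v<w\leq n}$ random variables, conditionally independent given $U$, with $\mathbb{E}[Y_{vw}\mid U]=\kappa(U_v,U_w)$ and $|Y_{vw}|\leq B$ (laws may depend on $n$), and define $X_{i,a}$ and $N^{i,a}_j$ as in the context. Let $m\geq2$ and $1\leq i,i_1,\dots,i_m\leq d$. Then there exists a constant $C>0$ independent of $n$ such that for all $n$ $$\Bigg|\mathbb{E}\sum_{a\in\mathcal{I}^n_{k_i}}\sum_{b_1\in N^{i,a}_{i_1}}\cdots\sum_{b_m\in N^{i,a}_{i_m}}X_{i,a}X_{i_1,b_1}\cdots X_{i_m,b_m}\Bigg|\leq Cn^{-(m-1)/2}.$$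
   Context: A graphon is a symmetric measurable $\kappa:[0,1]^2\to[0,1]$. $\mathcal{I}^n_k=\{(a_1,\dots,a_k)\in\mathbb{N}^k:1\leq a_1<\cdots<a_k\leq n\}$, $\mathcal{D}_k=\{x\in[0,1]^k:x_1\leq\cdots\leq x_k\}$, $a/n=(a_1/n,\dots,a_k/n)$, $U_a=(U_{a_1},\dots,U_{a_k})$. For $a\in\mathcal{I}^n_{k_i}$: $T_{i,a}=\prod_{\{v,w\}\in E(F_i),v<w}(Y_{a_va_w}-\kappa(U_{a_v},U_{a_w}))$ if $k_i\geq2$, $T_{i,a}=1$ if $k_i=1$; $\Phi_{i,a}=\psi_i(U_{a_1})-\mathbb{E}\psi_i(U_{a_1})$ if $k_i=1$, $\Phi_{i,a}=\psi_i(U_a)$ if $k_i\geq2$; $X_{i,a}=\binom{n}{k_i}^{-1/2}\phi_i(a/n)\Phi_{i,a}T_{i,a}$. For $1\leq j\leq d$, $N^{i,a}_j=\{b\in\mathcal{I}^n_{k_j}:|\{a_1,\dots,a_{k_i}\}\cap\{b_1,\dots,b_{k_j}\}|\geq\min(2,k_i)\}$. *)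

theory Defs
  imports "HOL-Probability.Probability"
begin

text \<open>Graphon: symmetric measurable kappa from [0,1]^2 to [0,1] (given as a Borel
  measurable function on the reals whose restriction to [0,1]^2 is the graphon).\<close>
definition graphon :: "(real \<Rightarrow> real \<Rightarrow> real) \<Rightarrow> bool" where
  "graphon \<kappa> \<longleftrightarrow> (\<lambda>(x, y). \<kappa> x y) \<in> borel_measurable borel
     \<and> (\<forall>x\<in>{0..1}. \<forall>y\<in>{0..1}. \<kappa> x y = \<kappa> y x \<and> \<kappa> x y \<in> {0..1})"

definition graph_on :: "nat \<Rightarrow> (nat \<times> nat) set \<Rightarrow> bool" where
  "graph_on k E \<longleftrightarrow> E \<subseteq> {(v, w). 1 \<le> v \<and> v < w \<and> w \<le> k}"

definition connected_graph_on :: "nat \<Rightarrow> (nat \<times> nat) set \<Rightarrow> bool" where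
  "connected_graph_on k E \<longleftrightarrow> graph_on k E \<and>
     (\<forall>v\<in>{1..k}. \<forall>w\<in>{1..k}. (v, w) \<in> (E \<union> E\<inverse>)\<^sup>*)"

definition cube :: "nat \<Rightarrow> (nat \<Rightarrow> real) set" where
  "cube k = PiE {1..k} (\<lambda>_. {0..1})"

definition Dsimplex :: "nat \<Rightarrow> (nat \<Rightarrow> real) set" where
  "Dsimplex k = {x \<in> cube k. \<forall>j\<in>{1..k}. \<forall>l\<in>{1..k}. j \<le> l \<longrightarrow> x j \<le> x l}"

definition Iset :: "nat \<Rightarrow> nat \<Rightarrow> (nat \<Rightarrow> nat) set" where
  "Iset n k = {a \<in> PiE {1..k} (\<lambda>_. {1..n}). \<forall>j\<in>{1..k}. \<forall>l\<in>{1..k}. j < l \<longrightarrow> a j < a l}"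

definition scaled :: "nat \<Rightarrow> nat \<Rightarrow> (nat \<Rightarrow> nat) \<Rightarrow> (nat \<Rightarrow> real)" where
  "scaled n k a = (\<lambda>j\<in>{1..k}. real (a j) / real n)"

definition Uvec :: "nat \<Rightarrow> (nat \<Rightarrow> 'o \<Rightarrow> real) \<Rightarrow> (nat \<Rightarrow> nat) \<Rightarrow> 'o \<Rightarrow> (nat \<Rightarrow> real)" where
  "Uvec k U a \<omega> = (\<lambda>j\<in>{1..k}. U (a j) \<omega>)"

definition sigmaU :: "'o measure \<Rightarrow> nat \<Rightarrow> (nat \<Rightarrow> 'o \<Rightarrow> real) \<Rightarrow> 'o measure" where
  "sigmaU M n U = sigma (space M) {U i -` A \<inter> space M | i A. i \<in> {1..n} \<and> A \<in> sets borel}"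

definition cond_indep_vars :: "'o measure \<Rightarrow> 'o measure \<Rightarrow> ('i \<Rightarrow> 'o \<Rightarrow> real) \<Rightarrow> 'i set \<Rightarrow> bool" where
  "cond_indep_vars M F X J \<longleftrightarrow>
     (\<forall>K A. finite K \<and> K \<subseteq> J \<and> (\<forall>j\<in>K. A j \<in> sets borel) \<longrightarrow>
        (AE \<omega> in M. real_cond_exp M F (indicator (\<Inter>j\<in>K. X j -` A j \<inter> space M)) \<omega>
            = (\<Prod>j\<in>K. real_cond_exp M F (indicator (X j -` A j \<inter> space M)) \<omega>)))"

definition Tterm :: "nat \<Rightarrow> (nat \<times> nat) set \<Rightarrow> (real \<Rightarrow> real \<Rightarrow> real)
    \<Rightarrow> (nat \<Rightarrow> 'o \<Rightarrow> real) \<Rightarrow> (nat \<Rightarrow> nat \<Rightarrow> 'o \<Rightarrow> real) \<Rightarrow> (nat \<Rightarrow> nat) \<Rightarrow> 'o \<Rightarrow> real" where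
  "Tterm k E \<kappa> U Y a \<omega> =
     (if k \<ge> 2 then (\<Prod>(v, w)\<in>E. Y (a v) (a w) \<omega> - \<kappa> (U (a v) \<omega>) (U (a w) \<omega>)) else 1)"

definition Phiterm :: "'o measure \<Rightarrow> nat \<Rightarrow> ((nat \<Rightarrow> real) \<Rightarrow> real)
    \<Rightarrow> (nat \<Rightarrow> 'o \<Rightarrow> real) \<Rightarrow> (nat \<Rightarrow> nat) \<Rightarrow> 'o \<Rightarrow> real" where
  "Phiterm M k \<psi> U a \<omega> =
     (if k = 1 then \<psi> (Uvec 1 U a \<omega>) - (\<integral>\<omega>'. \<psi> (Uvec 1 U a \<omega>') \<partial>M)
      else \<psi> (Uvec k U a \<omega>))"

definition Xterm :: "'o measure \<Rightarrow> nat \<Rightarrow> nat \<Rightarrow> (nat \<times> nat) set \<Rightarrow> ((nat \<Rightarrow> real) \<Rightarrow> real)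
    \<Rightarrow> ((nat \<Rightarrow> real) \<Rightarrow> real) \<Rightarrow> (real \<Rightarrow> real \<Rightarrow> real)
    \<Rightarrow> (nat \<Rightarrow> 'o \<Rightarrow> real) \<Rightarrow> (nat \<Rightarrow> nat \<Rightarrow> 'o \<Rightarrow> real) \<Rightarrow> (nat \<Rightarrow> nat) \<Rightarrow> 'o \<Rightarrow> real" where
  "Xterm M n k E \<phi> \<psi> \<kappa> U Y a \<omega> =
     (1 / sqrt (real (n choose k))) * \<phi> (scaled n k a) * Phiterm M k \<psi> U a \<omega> * Tterm k E \<kappa> U Y a \<omega>"

definition Nset :: "nat \<Rightarrow> nat \<Rightarrow> nat \<Rightarrow> (nat \<Rightarrow> nat) \<Rightarrow> (nat \<Rightarrow> nat) set" where
  "Nset n ki kj a = {b \<in> Iset n kj. card (a ` {1..ki} \<inter> b ` {1..kj}) \<ge> min 2 ki}"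

end

theory Submission
  imports Defs
begin


definition hrel :: "'i set \<Rightarrow> ('i \<Rightarrow> 'a set) \<Rightarrow> ('a \<times> 'a) set" where
  "hrel L S = {(x, y). \<exists>l\<in>L. x \<in> S l \<and> y \<in> S l}"

lemma hyper_pair:
  assumes "p \<in> L" "q \<in> L" "p \<noteq> q" "\<And>l. l \<in> L \<Longrightarrow> S l \<noteq> {}"
    and conn: "\<And>x y. x \<in> \<Union>(S ` L) \<Longrightarrow> y \<in> \<Union>(S ` L) \<Longrightarrow> (x, y) \<in> (hrel L S)\<^sup>*"
  shows "\<exists>p'\<in>L. \<exists>q'\<in>L. p' \<noteq> q' \<and> S p' \<inter> S q' \<noteq> {}"
proof (rule ccontr)
  assume H: "\<not> ?thesis"
  obtain x where x: "x \<in> S p" using assms(1,4) by blast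
  obtain y where y: "y \<in> S q" using assms(2,4) by blast
  have xy: "(x, y) \<in> (hrel L S)\<^sup>*" using conn x y assms(1,2) by blast
  have "z \<in> S p" if "(x, z) \<in> (hrel L S)\<^sup>*" for z
    using that
  proof (induction rule: rtrancl_induct)
    case base then show ?case using x .
  next
    case (step z z')
    then obtain l where l: "l \<in> L" "z \<in> S l" "z' \<in> S l" unfolding hrel_def by blast
    then have "l = p" using H step.IH assms(1) by blast
    then show ?case using l by simp
  qed
  then have "y \<in> S p" using xy .
  then show False using H y assms by blast
qed

lemma hyper_card:
  assumes "finite L" "L \<noteq> {}" "\<And>l. l \<in> L \<Longrightarrow> finite (S l) \<and> S l \<noteq> {}"
    "\<And>x y. x \<in> \<Union>(S ` L) \<Longrightarrow> y \<in> \<Union>(S ` L) \<Longrightarrow> (x, y) \<in> (hrel L S)\<^sup>*"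
  shows "card (\<Union>(S ` L)) + card L \<le> (\<Sum>l\<in>L. card (S l)) + 1"
  using assms
proof (induction "card L" arbitrary: L S rule: less_induct)
  case less
  show ?case
  proof (cases "card L = 1")
    case True
    then obtain l where "L = {l}" using card_1_singletonE by blast
    then show ?thesis by simp
  next
    case False
    then have "card L \<ge> 2" using less.prems(1,2) card_gt_0_iff[of L] by linarith
    then obtain p q where pq: "p \<in> L" "q \<in> L" "p \<noteq> q"
      using less.prems(1) card_le_Suc0_iff_eq[of L] by fastforce
    then obtain p q where pq: "p \<in> L" "q \<in> L" "p \<noteq> q" "S p \<inter> S q \<noteq> {}"
      using hyper_pair[of p L q S] less.prems by blast
    define L' where "L' = L - {q}"
    define S' where "S' = S(p := S p \<union> S q)"
    have cL': "card L' < card L" unfolding L'_def using pq less.prems(1) card_gt_0_iff[of L] by auto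
    have fin': "finite L'" "L' \<noteq> {}" unfolding L'_def using less.prems(1) pq by auto
    have pL': "p \<in> L'" unfolding L'_def using pq by auto
    have U: "\<Union>(S' ` L') = \<Union>(S ` L)"
      unfolding L'_def S'_def using pq by auto
    have S'fin: "\<And>l. l \<in> L' \<Longrightarrow> finite (S' l) \<and> S' l \<noteq> {}"
      unfolding L'_def S'_def using less.prems(3) pq by auto
    have R: "hrel L S \<subseteq> hrel L' S'"
    proof
      fix z assume "z \<in> hrel L S"
      then obtain x y l where z: "z = (x, y)" "l \<in> L" "x \<in> S l" "y \<in> S l" unfolding hrel_def by blast
      show "z \<in> hrel L' S'"
      proof (cases "l = q \<or> l = p")
        case True
        then have "x \<in> S' p" "y \<in> S' p" using z unfolding S'_def by auto
        then show ?thesis using z pL' unfolding hrel_def by blast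
      next
        case False
        then have "l \<in> L'" "S' l = S l" using z unfolding L'_def S'_def by auto
        then show ?thesis using z unfolding hrel_def by auto
      qed
    qed
    have conn': "\<And>x y. x \<in> \<Union>(S' ` L') \<Longrightarrow> y \<in> \<Union>(S' ` L') \<Longrightarrow> (x, y) \<in> (hrel L' S')\<^sup>*"
      using less.prems(4) U rtrancl_mono[OF R] by (metis subsetD)
    have IH: "card (\<Union>(S' ` L')) + card L' \<le> (\<Sum>l\<in>L'. card (S' l)) + 1"
      using less.hyps[OF cL' fin' S'fin conn'] by simp
    have s1: "(\<Sum>l\<in>L'. card (S' l)) = card (S p \<union> S q) + (\<Sum>l\<in>L' - {p}. card (S l))"
    proof -
      have "(\<Sum>l\<in>L'. card (S' l)) = card (S' p) + (\<Sum>l\<in>L' - {p}. card (S' l))"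
        using fin' pL' by (simp add: sum.remove)
      moreover have "(\<Sum>l\<in>L' - {p}. card (S' l)) = (\<Sum>l\<in>L' - {p}. card (S l))"
        unfolding S'_def by (rule sum.cong) auto
      ultimately show ?thesis unfolding S'_def by simp
    qed
    have s2: "(\<Sum>l\<in>L. card (S l)) = card (S q) + card (S p) + (\<Sum>l\<in>L' - {p}. card (S l))"
    proof -
      have "(\<Sum>l\<in>L. card (S l)) = card (S q) + (\<Sum>l\<in>L'. card (S l))"
        unfolding L'_def using less.prems(1) pq sum.remove[of L q "\<lambda>l. card (S l)"] by simp
      also have "(\<Sum>l\<in>L'. card (S l)) = card (S p) + (\<Sum>l\<in>L' - {p}. card (S l))"
        using fin' pL' by (simp add: sum.remove)
      finally show ?thesis by simp
    qed
    have cu: "card (S p \<union> S q) + 1 \<le> card (S p) + card (S q)"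
    proof -
      have "finite (S p)" "finite (S q)" using less.prems(3) pq by auto
      then have "card (S p \<union> S q) + card (S p \<inter> S q) = card (S p) + card (S q)"
        by (rule card_Un_Int[symmetric])
      moreover have "card (S p \<inter> S q) \<ge> 1" using pq \<open>finite (S p)\<close>
        by (simp add: Suc_leI card_gt_0_iff)
      ultimately show ?thesis by linarith
    qed
    have "card L = card L' + 1" unfolding L'_def using pq less.prems(1)
      by (simp add: card_Diff1_le) (metis One_nat_def Suc_pred card_gt_0_iff empty_iff)
    moreover have "card (\<Union>(S ` L)) + card L' \<le> (\<Sum>l\<in>L'. card (S' l)) + 1"
      using IH U by simp
    ultimately show ?thesis using s1 s2 cu by linarith
  qed
qed


locale gset = prob_space M
  for M :: "'o measure" +
  fixes n :: nat and U :: "nat \<Rightarrow> 'o \<Rightarrow> real" and Y :: "nat \<Rightarrow> nat \<Rightarrow> 'o \<Rightarrow> real"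
    and \<kappa> :: "real \<Rightarrow> real \<Rightarrow> real" and B :: real
  assumes kap: "graphon \<kappa>"
    and U_meas: "\<And>v. v \<in> {1..n} \<Longrightarrow> U v \<in> borel_measurable M"
    and U_range: "\<And>v \<omega>. v \<in> {1..n} \<Longrightarrow> \<omega> \<in> space M \<Longrightarrow> U v \<omega> \<in> {0..1}"
    and Y_meas: "\<And>v w. 1 \<le> v \<Longrightarrow> v < w \<Longrightarrow> w \<le> n \<Longrightarrow> Y v w \<in> borel_measurable M"
    and Y_bdd: "\<And>v w \<omega>. 1 \<le> v \<Longrightarrow> v < w \<Longrightarrow> w \<le> n \<Longrightarrow> \<omega> \<in> space M \<Longrightarrow> \<bar>Y v w \<omega>\<bar> \<le> B"
    and Y_condexp: "\<And>v w. 1 \<le> v \<Longrightarrow> v < w \<Longrightarrow> w \<le> n \<Longrightarrow>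
        AE \<omega> in M. real_cond_exp M (sigmaU M n U) (Y v w) \<omega> = \<kappa> (U v \<omega>) (U w \<omega>)"
    and Y_ci: "cond_indep_vars M (sigmaU M n U) (\<lambda>(v, w). Y v w) {(v, w). 1 \<le> v \<and> v < w \<and> w \<le> n}"
begin

abbreviation "Fs \<equiv> sigmaU M n U"
definition "J = {(v, w). 1 \<le> v \<and> v < w \<and> w \<le> n}"
definition "YY q = Y (fst q) (snd q)"
definition "kp q = (\<lambda>\<omega>. \<kappa> (U (fst q) \<omega>) (U (snd q) \<omega>))"
definition "EV Q D = {\<omega> \<in> space M. \<forall>q\<in>Q. YY q \<omega> \<in> D q}"
definition "PG Q = {A \<inter> EV Q D | A D. A \<in> sets Fs \<and> (\<forall>q\<in>Q. D q \<in> sets borel)}"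
definition "FG Q = sigma (space M) (PG Q)"

lemma J_finite: "finite J"
proof -
  have "J \<subseteq> {1..n} \<times> {1..n}" unfolding J_def by auto
  then show ?thesis by (rule finite_subset) auto
qed

lemma YY_meas: "q \<in> J \<Longrightarrow> YY q \<in> borel_measurable M"
  unfolding J_def YY_def using Y_meas by auto

lemma YY_bdd: "q \<in> J \<Longrightarrow> \<omega> \<in> space M \<Longrightarrow> \<bar>YY q \<omega>\<bar> \<le> B"
  unfolding J_def YY_def using Y_bdd by auto

lemma gen_sub: "{U i -` A \<inter> space M | i A. i \<in> {1..n} \<and> A \<in> sets borel} \<subseteq> sets M"
  using U_meas by (auto simp: measurable_sets)

lemma space_Fs: "space Fs = space M"
  unfolding sigmaU_def by (rule space_measure_of) auto

lemma sets_Fs: "sets Fs = sigma_sets (space M) {U i -` A \<inter> space M | i A. i \<in> {1..n} \<and> A \<in> sets borel}"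
  unfolding sigmaU_def by (rule sets_measure_of) auto

lemma Fs_sub: "subalgebra M Fs"
  unfolding subalgebra_def using space_Fs sets_Fs sets.sigma_sets_subset[OF gen_sub] by auto

sublocale fsF: finite_measure_subalgebra M "sigmaU M n U"
  by unfold_locales (rule Fs_sub)

lemma U_Fs: "v \<in> {1..n} \<Longrightarrow> U v \<in> borel_measurable Fs"
  by (rule measurableI) (auto simp: space_Fs sets_Fs)

lemma kp_Fs: "q \<in> J \<Longrightarrow> kp q \<in> borel_measurable Fs"
proof -
  assume q: "q \<in> J"
  have k: "(\<lambda>(x, y). \<kappa> x y) \<in> borel_measurable (borel \<Otimes>\<^sub>M borel)"
    using kap unfolding graphon_def by (simp add: borel_prod)
  have p: "(\<lambda>\<omega>. (U (fst q) \<omega>, U (snd q) \<omega>)) \<in> measurable Fs (borel \<Otimes>\<^sub>M borel)"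
    using q U_Fs unfolding J_def by (auto intro!: measurable_Pair)
  have "kp q = (\<lambda>(x, y). \<kappa> x y) \<circ> (\<lambda>\<omega>. (U (fst q) \<omega>, U (snd q) \<omega>))"
    unfolding kp_def by auto
  then show ?thesis using measurable_comp[OF p k] by simp
qed

lemma kp_M: "q \<in> J \<Longrightarrow> kp q \<in> borel_measurable M"
  using measurable_from_subalg[OF Fs_sub kp_Fs] .

lemma kp_range: "q \<in> J \<Longrightarrow> \<omega> \<in> space M \<Longrightarrow> kp q \<omega> \<in> {0..1}"
  using kap U_range unfolding graphon_def kp_def J_def by auto

lemma EV_meas: "Q \<subseteq> J \<Longrightarrow> (\<forall>q\<in>Q. D q \<in> sets borel) \<Longrightarrow> EV Q D \<in> sets M"
proof -
  assume Q: "Q \<subseteq> J" and D: "\<forall>q\<in>Q. D q \<in> sets borel"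
  have fQ: "finite Q" using Q J_finite finite_subset by blast
  have "\<And>q. q \<in> Q \<Longrightarrow> {\<omega> \<in> space M. YY q \<omega> \<in> D q} \<in> sets M"
    using Q D YY_meas by (auto intro: measurable_sets_Collect)
  then have "{\<omega> \<in> space M. \<forall>q\<in>Q. YY q \<omega> \<in> D q} \<in> sets M"
    using fQ by (intro sets.sets_Collect_finite_All) (auto simp: pred_def)
  then show ?thesis unfolding EV_def .
qed


lemma Fs_sets_M: "A \<in> sets Fs \<Longrightarrow> A \<in> sets M"
  using Fs_sub unfolding subalgebra_def by auto

lemma PG_M: "Q \<subseteq> J \<Longrightarrow> PG Q \<subseteq> sets M"
  unfolding PG_def using Fs_sets_M EV_meas by blast

lemma PG_Pow: "Q \<subseteq> J \<Longrightarrow> PG Q \<subseteq> Pow (space M)"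
  using PG_M sets.sets_into_space by blast

lemma space_FG: "Q \<subseteq> J \<Longrightarrow> space (FG Q) = space M"
  unfolding FG_def using PG_Pow by (simp add: space_measure_of)

lemma sets_FG: "Q \<subseteq> J \<Longrightarrow> sets (FG Q) = sigma_sets (space M) (PG Q)"
  unfolding FG_def using PG_Pow by (simp add: sets_measure_of)


lemma FG_sub: "Q \<subseteq> J \<Longrightarrow> subalgebra M (FG Q)"
proof -
  assume Q: "Q \<subseteq> J"
  have "sigma_sets (space M) (PG Q) \<subseteq> sets M" by (rule sets.sigma_sets_subset[OF PG_M[OF Q]])
  then show ?thesis unfolding subalgebra_def using space_FG[OF Q] sets_FG[OF Q] by simp
qed

lemma EV_UNIV: "EV Q (\<lambda>_. UNIV) = space M"
  unfolding EV_def by auto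

lemma Fs_PG: "A \<in> sets Fs \<Longrightarrow> A \<in> PG Q"
proof -
  assume A: "A \<in> sets Fs"
  then have "A = A \<inter> EV Q (\<lambda>_. UNIV)" using EV_UNIV sets.sets_into_space[OF Fs_sets_M[OF A]] by auto
  moreover have "\<forall>q\<in>Q. (\<lambda>_. UNIV) q \<in> sets (borel :: real measure)" by simp
  ultimately show ?thesis unfolding PG_def using A by blast
qed

lemma Fs_FG: "Q \<subseteq> J \<Longrightarrow> sets Fs \<subseteq> sets (FG Q)"
  using Fs_PG sets_FG by auto


lemma Fs_meas_FG: "Q \<subseteq> J \<Longrightarrow> f \<in> borel_measurable Fs \<Longrightarrow> f \<in> borel_measurable (FG Q)"
  by (rule measurable_from_subalg[of "FG Q" Fs]) (auto simp: subalgebra_def space_FG space_Fs Fs_FG)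

lemma U_FG: "Q \<subseteq> J \<Longrightarrow> v \<in> {1..n} \<Longrightarrow> U v \<in> borel_measurable (FG Q)"
  using Fs_meas_FG U_Fs by blast

lemma kp_FG: "Q \<subseteq> J \<Longrightarrow> q \<in> J \<Longrightarrow> kp q \<in> borel_measurable (FG Q)"
  using Fs_meas_FG kp_Fs by blast

lemma PG_Int_stable: "Int_stable (PG Q)"
proof (rule Int_stableI)
  fix a b assume "a \<in> PG Q" "b \<in> PG Q"
  then obtain A D A' D' where a: "a = A \<inter> EV Q D" "A \<in> sets Fs" "\<forall>q\<in>Q. D q \<in> sets borel"
    and b: "b = A' \<inter> EV Q D'" "A' \<in> sets Fs" "\<forall>q\<in>Q. D' q \<in> sets borel"
    unfolding PG_def by blast
  have "a \<inter> b = (A \<inter> A') \<inter> EV Q (\<lambda>q. D q \<inter> D' q)" unfolding a b EV_def by auto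
  moreover have "A \<inter> A' \<in> sets Fs" using a b by auto
  ultimately show "a \<inter> b \<in> PG Q" unfolding PG_def using a b by blast
qed

lemma space_PG: "space M \<in> PG Q"
  using Fs_PG[of "space M"] space_Fs by (metis sets.top)

lemma setint_ind: "set_lebesgue_integral M A (f::'o\<Rightarrow>real) = (\<integral>x. indicator A x * f x \<partial>M)"
  unfolding set_lebesgue_integral_def by (simp add: real_scaleR_def)


lemma YY_FG: "Q \<subseteq> J \<Longrightarrow> q \<in> Q \<Longrightarrow> YY q \<in> borel_measurable (FG Q)"
proof (rule measurableI)
  assume Q: "Q \<subseteq> J" and q: "q \<in> Q"
  fix D :: "real set" assume D: "D \<in> sets borel"
  define D' where "D' = (\<lambda>q'. if q' = q then D else UNIV)"
  have "YY q -` D \<inter> space (FG Q) = space M \<inter> EV Q D'"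
    unfolding D'_def EV_def using q Q space_FG by auto
  moreover have "space M \<inter> EV Q D' \<in> PG Q"
  proof -
    have "space M \<in> sets Fs" using space_Fs by (metis sets.top)
    moreover have "\<forall>q'\<in>Q. D' q' \<in> sets borel" using D unfolding D'_def by simp
    ultimately show ?thesis unfolding PG_def by blast
  qed
  ultimately show "YY q -` D \<inter> space (FG Q) \<in> sets (FG Q)" using sets_FG[OF Q] by auto
qed auto


lemma int_ind: "A \<in> sets M \<Longrightarrow> integrable M f \<Longrightarrow> integrable M (\<lambda>x. indicator A x * (f x::real))"
  using integrable_real_mult_indicator[of A M f] by (simp add: mult.commute)

lemma L1:
  assumes Q: "Q \<subseteq> J" and Z: "integrable M Z" and h: "integrable M h" "h \<in> borel_measurable (FG Q)"
    and eq: "\<And>C. C \<in> PG Q \<Longrightarrow> (\<integral>x\<in>C. Z x \<partial>M) = (\<integral>x\<in>C. h x \<partial>M)"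
  shows "AE x in M. real_cond_exp M (FG Q) Z x = h x"
proof -
  interpret fs: finite_measure_subalgebra M "FG Q"
    by unfold_locales (rule FG_sub[OF Q])
  show ?thesis
  proof (rule fs.real_cond_exp_charact[OF _ Z h])
    fix A assume "A \<in> sets (FG Q)"
    then have "A \<in> sigma_sets (space M) (PG Q)" using sets_FG[OF Q] by simp
    with PG_Int_stable PG_Pow[OF Q] show "(\<integral>x\<in>A. Z x \<partial>M) = (\<integral>x\<in>A. h x \<partial>M)"
    proof (induction rule: sigma_sets_induct_disjoint)
      case (basic A) then show ?case using eq by blast
    next
      case empty then show ?case by (simp add: setint_ind)
    next
      case (compl A)
      have AM: "A \<in> sets M" using compl(1) sets.sigma_sets_subset[OF PG_M[OF Q]] by blast
      have ind: "\<And>x. indicator (space M - A) x = indicator (space M) x - (indicator A x :: real)"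
        using sets.sets_into_space[OF AM] by (auto split: split_indicator)
      have "\<And>f::'o\<Rightarrow>real. integrable M f \<Longrightarrow> (\<integral>x\<in>space M - A. f x \<partial>M) = (\<integral>x\<in>space M. f x \<partial>M) - (\<integral>x\<in>A. f x \<partial>M)"
      proof -
        fix f :: "'o \<Rightarrow> real" assume f: "integrable M f"
        have "(\<integral>x\<in>space M - A. f x \<partial>M) = (\<integral>x. indicator (space M) x * f x - indicator A x * f x \<partial>M)"
          unfolding setint_ind ind by (simp add: left_diff_distrib)
        also have "\<dots> = (\<integral>x. indicator (space M) x * f x \<partial>M) - (\<integral>x. indicator A x * f x \<partial>M)"
          using f AM by (intro Bochner_Integration.integral_diff int_ind) auto
        finally show "?thesis f" by (simp add: setint_ind)
      qed
      then show ?case using Z h compl(2) eq[OF space_PG] by simp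
    next
      case (union A)
      have AM: "\<And>i. A i \<in> sets M" using union(2) sets.sigma_sets_subset[OF PG_M[OF Q]] by blast
      have disj: "\<And>i j. i \<noteq> j \<Longrightarrow> A i \<inter> A j = {}" using union(1) unfolding disjoint_family_on_def by auto
      have UM: "(\<Union>i. A i) \<in> sets M" using AM by blast
      have "(\<integral>x\<in>(\<Union>i. A i). Z x \<partial>M) = (\<Sum>i. (\<integral>x\<in>A i. Z x \<partial>M))"
        by (rule lebesgue_integral_countable_add[OF AM disj]) (use Z UM in \<open>auto simp: set_integrable_def intro!: int_ind\<close>)
      also have "\<dots> = (\<Sum>i. (\<integral>x\<in>A i. h x \<partial>M))" using union(3) by simp
      also have "\<dots> = (\<integral>x\<in>(\<Union>i. A i). h x \<partial>M)"
        by (rule lebesgue_integral_countable_add[OF AM disj, symmetric]) (use h UM in \<open>auto simp: set_integrable_def intro!: int_ind\<close>)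
      finally show ?case .
    qed
  qed
qed

lemma bint: "(f::'o\<Rightarrow>real) \<in> borel_measurable M \<Longrightarrow> (\<And>x. x \<in> space M \<Longrightarrow> \<bar>f x\<bar> \<le> c) \<Longrightarrow> integrable M f"
  by (rule integrable_const_bound[of _ c]) auto

lemma indA_Fs: "A \<in> sets Fs \<Longrightarrow> (indicator A :: 'o \<Rightarrow> real) \<in> borel_measurable Fs"
  by simp

lemma CI:
  assumes K: "K \<subseteq> J" and D: "\<forall>q\<in>K. D q \<in> sets borel"
  shows "AE \<omega> in M. real_cond_exp M Fs (indicator (EV K D)) \<omega>
     = (\<Prod>j\<in>K. real_cond_exp M Fs (indicator (EV {j} D)) \<omega>)"
proof -
  have fK: "finite K" using K J_finite finite_subset by blast
  have ci: "AE \<omega> in M. real_cond_exp M Fs (indicator (\<Inter>j\<in>K. (\<lambda>(v, w). Y v w) j -` D j \<inter> space M)) \<omega>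
            = (\<Prod>j\<in>K. real_cond_exp M Fs (indicator ((\<lambda>(v, w). Y v w) j -` D j \<inter> space M)) \<omega>)"
    using Y_ci fK K D unfolding cond_indep_vars_def J_def by blast
  have s1: "\<And>j. (\<lambda>(v, w). Y v w) j -` D j \<inter> space M = EV {j} D"
    unfolding EV_def YY_def by (auto simp: split_beta)
  have s2: "\<And>\<omega>. \<omega> \<in> space M \<Longrightarrow> indicator (\<Inter>j\<in>K. (\<lambda>(v, w). Y v w) j -` D j \<inter> space M) \<omega>
     = (indicator (EV K D) \<omega> :: real)"
    unfolding EV_def YY_def by (auto simp: split_beta split: split_indicator)
  have mEV: "(indicator (EV K D) :: 'o \<Rightarrow> real) \<in> borel_measurable M"
    using EV_meas[OF K D] by simp
  have m2: "(indicator (\<Inter>j\<in>K. (\<lambda>(v, w). Y v w) j -` D j \<inter> space M) :: 'o \<Rightarrow> real) \<in> borel_measurable M"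
    using measurable_cong[of M "indicator (\<Inter>j\<in>K. (\<lambda>(v, w). Y v w) j -` D j \<inter> space M)" "indicator (EV K D)" borel, OF s2] mEV by blast
  have "AE \<omega> in M. real_cond_exp M Fs (indicator (\<Inter>j\<in>K. (\<lambda>(v, w). Y v w) j -` D j \<inter> space M)) \<omega>
      = real_cond_exp M Fs (indicator (EV K D)) \<omega>"
    by (rule fsF.real_cond_exp_cong[OF AE_I2[OF s2] m2 mEV])
  then show ?thesis using ci unfolding s1 by auto
qed

lemma App1:
  assumes p: "p \<in> J" and Q: "Q \<subseteq> J" "p \<notin> Q" and D: "\<forall>q\<in>Q. D q \<in> sets borel"
  shows "AE \<omega> in M. real_cond_exp M (FG {p}) (indicator (EV Q D)) \<omega> = real_cond_exp M Fs (indicator (EV Q D)) \<omega>"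
proof (rule L1)
  show pJ: "{p} \<subseteq> J" using p by simp
  have EVM: "EV Q D \<in> sets M" by (rule EV_meas[OF Q(1) D])
  show Iint: "integrable M (indicator (EV Q D) :: 'o \<Rightarrow> real)"
    by (rule bint[of _ 1]) (use EVM in \<open>auto split: split_indicator\<close>)
  show "integrable M (real_cond_exp M Fs (indicator (EV Q D)))"
    by (rule fsF.real_cond_exp_int(1)) fact
  show "real_cond_exp M Fs (indicator (EV Q D)) \<in> borel_measurable (FG {p})"
    by (rule Fs_meas_FG[OF pJ]) simp
  fix C assume "C \<in> PG {p}"
  then obtain A D' where C: "C = A \<inter> EV {p} D'" and A: "A \<in> sets Fs" and D': "D' p \<in> sets borel"
    unfolding PG_def by blast
  define D'' where "D'' = D(p := D' p)"
  have D'': "\<forall>q\<in>insert p Q. D'' q \<in> sets borel" using D D' unfolding D''_def by auto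
  have AM: "A \<in> sets M" using Fs_sets_M[OF A] .
  have EV''M: "EV (insert p Q) D'' \<in> sets M" by (rule EV_meas) (use p Q D'' in auto)
  have EVpM: "EV {p} D' \<in> sets M" by (rule EV_meas) (use p D' in auto)
  let ?R = "\<lambda>S. real_cond_exp M Fs (indicator S)"
  have EQ: "EV Q D'' = EV Q D" "\<And>q. q \<in> Q \<Longrightarrow> EV {q} D'' = EV {q} D" "EV {p} D'' = EV {p} D'"
    unfolding EV_def D''_def using Q by auto
  have ae1: "AE \<omega> in M. ?R (EV (insert p Q) D'') \<omega> = ?R (EV {p} D') \<omega> * ?R (EV Q D) \<omega>"
  proof -
    have a: "AE \<omega> in M. ?R (EV (insert p Q) D'') \<omega> = (\<Prod>j\<in>insert p Q. ?R (EV {j} D'') \<omega>)"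
      by (rule CI) (use p Q D'' in auto)
    have b: "AE \<omega> in M. ?R (EV Q D'') \<omega> = (\<Prod>j\<in>Q. ?R (EV {j} D'') \<omega>)"
      by (rule CI) (use p Q D'' in auto)
    have fQ: "finite Q" using Q J_finite finite_subset by blast
    show ?thesis using a b by eventually_elim (use fQ Q EQ in simp)
  qed
  have "(\<integral>x\<in>C. indicator (EV Q D) x \<partial>M) = (\<integral>x. indicator A x * indicator (EV (insert p Q) D'') x \<partial>M :: real)"
    unfolding setint_ind C
    by (rule Bochner_Integration.integral_cong) (use Q in \<open>auto simp: EV_def D''_def split: split_indicator\<close>)
  also have "\<dots> = (\<integral>x. indicator A x * ?R (EV (insert p Q) D'') x \<partial>M)"
    by (rule fsF.real_cond_exp_intg(2)[symmetric]) (use AM EV''M A in \<open>auto intro!: bint[of _ 1] split: split_indicator\<close>)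
  also have "\<dots> = (\<integral>x. (indicator A x * ?R (EV Q D) x) * indicator (EV {p} D') x \<partial>M)"
  proof -
    have "(\<integral>x. indicator A x * ?R (EV (insert p Q) D'') x \<partial>M) = (\<integral>x. (indicator A x * ?R (EV Q D) x) * ?R (EV {p} D') x \<partial>M)"
      by (rule integral_cong_AE) (use ae1 AM in \<open>auto elim!: eventually_mono intro!: borel_measurable_times borel_measurable_indicator\<close>)
    also have "\<dots> = (\<integral>x. (indicator A x * ?R (EV Q D) x) * indicator (EV {p} D') x \<partial>M)"
    proof (rule fsF.real_cond_exp_intg(2))
      have "integrable M (\<lambda>x. indicator (A \<inter> EV {p} D') x * ?R (EV Q D) x)"
        by (rule int_ind) (use AM EVpM fsF.real_cond_exp_int(1)[OF Iint] in auto)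
      then show "integrable M (\<lambda>x. indicator A x * ?R (EV Q D) x * indicator (EV {p} D') x)"
        by (rule back_subst[of "integrable M"]) (auto simp: fun_eq_iff split: split_indicator)
    qed (use A EVpM in auto)
    finally show ?thesis .
  qed
  also have "\<dots> = (\<integral>x\<in>C. ?R (EV Q D) x \<partial>M)"
    unfolding setint_ind C by (rule Bochner_Integration.integral_cong) (auto split: split_indicator)
  finally show "(\<integral>x\<in>C. indicator (EV Q D) x \<partial>M) = (\<integral>x\<in>C. ?R (EV Q D) x \<partial>M)" .
qed

lemma YY_int: "q \<in> J \<Longrightarrow> integrable M (YY q)"
  by (rule bint[of _ B]) (auto intro: YY_meas YY_bdd)

lemma kp_int: "q \<in> J \<Longrightarrow> integrable M (kp q)"
  by (rule bint[of _ 1]) (use kp_M kp_range in auto)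

lemma App2:
  assumes p: "p \<in> J"
  shows "AE \<omega> in M. real_cond_exp M (FG (J - {p})) (YY p) \<omega> = kp p \<omega>"
proof (rule L1)
  show QJ: "J - {p} \<subseteq> J" by auto
  show "integrable M (YY p)" using YY_int[OF p] .
  show "integrable M (kp p)" using kp_int[OF p] .
  show "kp p \<in> borel_measurable (FG (J - {p}))" using kp_FG[OF QJ p] .
  fix C assume "C \<in> PG (J - {p})"
  then obtain A D where C: "C = A \<inter> EV (J - {p}) D" and A: "A \<in> sets Fs" and D: "\<forall>q\<in>J - {p}. D q \<in> sets borel"
    unfolding PG_def by blast
  define I where "I = EV (J - {p}) D"
  have AM: "A \<in> sets M" using Fs_sets_M[OF A] .
  have IM: "I \<in> sets M" unfolding I_def by (rule EV_meas[OF QJ D])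
  have pJ: "{p} \<subseteq> J" using p by simp
  interpret fp: finite_measure_subalgebra M "FG {p}"
    by unfold_locales (rule FG_sub[OF pJ])
  let ?R = "real_cond_exp M Fs (indicator I)"
  have Iint: "integrable M (indicator I :: 'o \<Rightarrow> real)"
    by (rule bint[of _ 1]) (use IM in \<open>auto split: split_indicator\<close>)
  have Rint: "integrable M ?R" by (rule fsF.real_cond_exp_int(1)[OF Iint])
  have Ym: "YY p \<in> borel_measurable M" using YY_meas[OF p] .
  have km: "kp p \<in> borel_measurable M" using kp_M[OF p] .
  have "(\<integral>x\<in>C. YY p x \<partial>M) = (\<integral>x. (indicator A x * YY p x) * indicator I x \<partial>M)"
    unfolding setint_ind C I_def by (rule Bochner_Integration.integral_cong) (auto split: split_indicator)
  also have "\<dots> = (\<integral>x. (indicator A x * YY p x) * real_cond_exp M (FG {p}) (indicator I) x \<partial>M)"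
  proof (rule fp.real_cond_exp_intg(2)[symmetric])
    show "integrable M (\<lambda>x. indicator A x * YY p x * indicator I x)"
    proof (rule bint[of _ B])
      fix x assume x: "x \<in> space M"
      have "\<bar>YY p x\<bar> \<le> B" using YY_bdd[OF p x] .
      then show "\<bar>indicator A x * YY p x * indicator I x\<bar> \<le> B"
        by (auto split: split_indicator)
    qed (use AM IM Ym in auto)
    have "(indicator A :: 'o \<Rightarrow> real) \<in> borel_measurable (FG {p})"
      using Fs_meas_FG[OF pJ, of "indicator A"] A by simp
    moreover have "YY p \<in> borel_measurable (FG {p})" using YY_FG[OF pJ] by simp
    ultimately show "(\<lambda>x. indicator A x * YY p x) \<in> borel_measurable (FG {p})" by (rule borel_measurable_times)
  qed (use IM in simp)
  also have "\<dots> = (\<integral>x. (indicator A x * YY p x) * ?R x \<partial>M)"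
  proof (rule integral_cong_AE)
    have "AE \<omega> in M. real_cond_exp M (FG {p}) (indicator I) \<omega> = ?R \<omega>"
      unfolding I_def by (rule App1) (use p D in auto)
    then show "AE x in M. indicator A x * YY p x * real_cond_exp M (FG {p}) (indicator I) x = indicator A x * YY p x * ?R x"
      by eventually_elim simp
  qed (use AM Ym in auto)
  also have "\<dots> = (\<integral>x. (indicator A x * ?R x) * YY p x \<partial>M)"
    by (simp add: mult_ac)
  also have "\<dots> = (\<integral>x. (indicator A x * ?R x) * real_cond_exp M Fs (YY p) x \<partial>M)"
  proof (rule fsF.real_cond_exp_intg(2)[symmetric])
    show "integrable M (\<lambda>x. indicator A x * ?R x * YY p x)"
    proof (rule Bochner_Integration.integrable_bound[of _ "\<lambda>x. \<bar>B\<bar> * ?R x"])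
      show "integrable M (\<lambda>x. \<bar>B\<bar> * ?R x)" using Rint by simp
      show "AE x in M. norm (indicator A x * ?R x * YY p x) \<le> norm (\<bar>B\<bar> * ?R x)"
      proof (rule AE_I2)
        fix x assume x: "x \<in> space M"
        have "\<bar>YY p x\<bar> \<le> \<bar>B\<bar>" using YY_bdd[OF p x] by simp
        then show "norm (indicator A x * ?R x * YY p x) \<le> norm (\<bar>B\<bar> * ?R x)"
          by (auto simp: abs_mult mult.commute[of "\<bar>B\<bar>"] intro: mult_left_mono split: split_indicator)
      qed
    qed (use AM Ym in auto)
  qed (use A Ym in auto)
  also have "\<dots> = (\<integral>x. (indicator A x * ?R x) * kp p x \<partial>M)"
  proof (rule integral_cong_AE)
    have "AE \<omega> in M. real_cond_exp M Fs (YY p) \<omega> = kp p \<omega>"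
      using Y_condexp p unfolding J_def YY_def kp_def by auto
    then show "AE x in M. indicator A x * ?R x * real_cond_exp M Fs (YY p) x = indicator A x * ?R x * kp p x"
      by eventually_elim simp
  qed (use AM km in auto)
  also have "\<dots> = (\<integral>x. (indicator A x * kp p x) * ?R x \<partial>M)"
    by (simp add: mult_ac)
  also have "\<dots> = (\<integral>x. (indicator A x * kp p x) * indicator I x \<partial>M)"
  proof (rule fsF.real_cond_exp_intg(2))
    show "integrable M (\<lambda>x. indicator A x * kp p x * indicator I x)"
      by (rule bint[of _ 1]) (use AM IM km kp_range[OF p] in \<open>auto split: split_indicator\<close>)
    show "(\<lambda>x. indicator A x * kp p x) \<in> borel_measurable Fs"
      using A kp_Fs[OF p] by simp
  qed (use IM in simp)
  also have "\<dots> = (\<integral>x\<in>C. kp p x \<partial>M)"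
    unfolding setint_ind C I_def by (rule Bochner_Integration.integral_cong) (auto split: split_indicator)
  finally show "(\<integral>x\<in>C. YY p x \<partial>M) = (\<integral>x\<in>C. kp p x \<partial>M)" .
qed

lemma ZERO:
  assumes p: "p \<in> J" and G: "G \<in> borel_measurable (FG (J - {p}))"
    and Gb: "\<And>x. x \<in> space M \<Longrightarrow> \<bar>G x\<bar> \<le> c"
  shows "(\<integral>x. G x * (YY p x - kp p x) \<partial>M) = 0"
proof -
  have QJ: "J - {p} \<subseteq> J" by auto
  interpret fq: finite_measure_subalgebra M "FG (J - {p})"
    by unfold_locales (rule FG_sub[OF QJ])
  have GM: "G \<in> borel_measurable M" by (rule measurable_from_subalg[OF FG_sub[OF QJ] G])
  have Ym: "YY p \<in> borel_measurable M" using YY_meas[OF p] .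
  have km: "kp p \<in> borel_measurable M" using kp_M[OF p] .
  have i1: "integrable M (\<lambda>x. G x * YY p x)"
    by (rule bint[of _ "c * B"]) (use GM Ym Gb YY_bdd[OF p] in \<open>auto simp: abs_mult intro: mult_mono'\<close>)
  have i2: "integrable M (\<lambda>x. G x * kp p x)"
  proof (rule bint[of _ "c"])
    fix x assume x: "x \<in> space M"
    have "\<bar>G x\<bar> * \<bar>kp p x\<bar> \<le> \<bar>G x\<bar> * 1"
      using kp_range[OF p x] by (intro mult_left_mono) auto
    then show "\<bar>G x * kp p x\<bar> \<le> c" using Gb[OF x] by (simp add: abs_mult)
  qed (use GM km in auto)
  have "(\<integral>x. G x * YY p x \<partial>M) = (\<integral>x. G x * real_cond_exp M (FG (J - {p})) (YY p) x \<partial>M)"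
    by (rule fq.real_cond_exp_intg(2)[symmetric]) (use i1 G Ym in auto)
  also have "\<dots> = (\<integral>x. G x * kp p x \<partial>M)"
  proof (rule integral_cong_AE)
    show "AE x in M. G x * real_cond_exp M (FG (J - {p})) (YY p) x = G x * kp p x"
      using App2[OF p] by eventually_elim simp
  qed (use GM km in auto)
  finally have "(\<integral>x. G x * YY p x \<partial>M) = (\<integral>x. G x * kp p x \<partial>M)" .
  then show ?thesis
    using Bochner_Integration.integral_diff[OF i1 i2] by (simp add: right_diff_distrib)
qed

definition "tq q \<omega> = YY q \<omega> - kp q \<omega>"

lemma tq_FG: "Q \<subseteq> J \<Longrightarrow> q \<in> Q \<Longrightarrow> tq q \<in> borel_measurable (FG Q)"
  unfolding tq_def using YY_FG kp_FG by (metis borel_measurable_diff subsetD)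

lemma tq_bdd: "q \<in> J \<Longrightarrow> \<omega> \<in> space M \<Longrightarrow> \<bar>tq q \<omega>\<bar> \<le> \<bar>B\<bar> + 1"
  using YY_bdd[of q \<omega>] kp_range[of q \<omega>] unfolding tq_def by auto

lemma abs_int_le: "integrable M f \<Longrightarrow> (\<And>x. x \<in> space M \<Longrightarrow> \<bar>f x\<bar> \<le> c) \<Longrightarrow> \<bar>integral\<^sup>L M f\<bar> \<le> (c::real)"
proof -
  assume f: "integrable M f" and b: "\<And>x. x \<in> space M \<Longrightarrow> \<bar>f x\<bar> \<le> c"
  have "\<bar>integral\<^sup>L M f\<bar> \<le> (\<integral>x. \<bar>f x\<bar> \<partial>M)" by (rule integral_abs_bound)
  also have "\<dots> \<le> c" using f b by (intro integral_le_const) auto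
  finally show ?thesis .
qed

lemma Iset_J: "a \<in> Iset n k \<Longrightarrow> 1 \<le> v \<Longrightarrow> v < w \<Longrightarrow> w \<le> k \<Longrightarrow> (a v, a w) \<in> J"
  unfolding Iset_def J_def PiE_def Pi_def by auto

lemma Iset_range: "a \<in> Iset n k \<Longrightarrow> j \<in> {1..k} \<Longrightarrow> a j \<in> {1..n}"
  unfolding Iset_def PiE_def Pi_def by auto

lemma Uvec_FG:
  assumes Q: "Q \<subseteq> J" and a: "a \<in> Iset n k"
  shows "Uvec k U a \<in> measurable (FG Q) (restrict_space (PiM {1..k} (\<lambda>_. borel)) (cube k))"
proof (rule measurable_restrict_space2)
  show "Uvec k U a \<in> space (FG Q) \<rightarrow> cube k"
    using U_range Iset_range[OF a] space_FG[OF Q] unfolding Uvec_def cube_def by auto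
  have "(\<lambda>\<omega>. \<lambda>j\<in>{1..k}. U (a j) \<omega>) \<in> measurable (FG Q) (PiM {1..k} (\<lambda>_. borel))"
    by (rule measurable_restrict) (use U_FG[OF Q] Iset_range[OF a] in auto)
  then show "Uvec k U a \<in> measurable (FG Q) (PiM {1..k} (\<lambda>_. borel))"
    unfolding Uvec_def by simp
qed

lemma Uvec_cube: "a \<in> Iset n k \<Longrightarrow> \<omega> \<in> space M \<Longrightarrow> Uvec k U a \<omega> \<in> cube k"
  using U_range Iset_range unfolding Uvec_def cube_def by auto

lemma Phi_FG:
  assumes Q: "Q \<subseteq> J" and a: "a \<in> Iset n k"
    and psm: "\<psi> \<in> borel_measurable (restrict_space (PiM {1..k} (\<lambda>_. borel)) (cube k))"
  shows "Phiterm M k \<psi> U a \<in> borel_measurable (FG Q)"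
proof -
  have "(\<lambda>\<omega>. \<psi> (Uvec k U a \<omega>)) \<in> borel_measurable (FG Q)"
    using measurable_comp[OF Uvec_FG[OF Q a] psm] by (simp add: comp_def)
  moreover have "(\<lambda>\<omega>. \<psi> (Uvec 1 U a \<omega>)) \<in> borel_measurable (FG Q)" if "k = 1"
    using measurable_comp[OF Uvec_FG[OF Q a] psm] that by (simp add: comp_def)
  ultimately show ?thesis unfolding Phiterm_def by (cases "k = 1") auto
qed

lemma Phi_bdd:
  assumes a: "a \<in> Iset n k"
    and psm: "\<psi> \<in> borel_measurable (restrict_space (PiM {1..k} (\<lambda>_. borel)) (cube k))"
    and psb: "\<And>x. x \<in> cube k \<Longrightarrow> \<bar>\<psi> x\<bar> \<le> c" and \<omega>: "\<omega> \<in> space M"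
  shows "\<bar>Phiterm M k \<psi> U a \<omega>\<bar> \<le> 2 * c"
proof -
  have b1: "\<bar>\<psi> (Uvec k U a \<omega>')\<bar> \<le> c" if "\<omega>' \<in> space M" for \<omega>'
    using psb Uvec_cube[OF a that] by blast
  have c0: "0 \<le> c" using b1[OF \<omega>] by linarith
  show ?thesis
  proof (cases "k = 1")
    case True
    have JJ: "J \<subseteq> J" by simp
    have mF: "(\<lambda>\<omega>. \<psi> (Uvec k U a \<omega>)) \<in> borel_measurable (FG J)"
      using measurable_comp[OF Uvec_FG[OF JJ a] psm] by (simp add: comp_def)
    have mM: "(\<lambda>\<omega>. \<psi> (Uvec k U a \<omega>)) \<in> borel_measurable M"
      by (rule measurable_from_subalg[OF FG_sub[OF JJ] mF])
    have "\<bar>\<integral>\<omega>'. \<psi> (Uvec k U a \<omega>') \<partial>M\<bar> \<le> c"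
      by (rule abs_int_le[OF bint[OF mM b1] b1]) auto
    then show ?thesis using b1[OF \<omega>] True unfolding Phiterm_def by auto
  next
    case False
    then show ?thesis using b1[OF \<omega>] c0 unfolding Phiterm_def by auto
  qed
qed

lemma T_eq: "Tterm k E \<kappa> U Y a \<omega> = (\<Prod>e\<in>(if 2 \<le> k then E else {}). tq (a (fst e), a (snd e)) \<omega>)"
  unfolding Tterm_def tq_def YY_def kp_def by (auto simp: split_beta)

lemma X_FG:
  assumes Q: "Q \<subseteq> J" and a: "a \<in> Iset n k"
    and psm: "\<psi> \<in> borel_measurable (restrict_space (PiM {1..k} (\<lambda>_. borel)) (cube k))"
    and E: "\<And>e. e \<in> (if 2 \<le> k then E else {}) \<Longrightarrow> (a (fst e), a (snd e)) \<in> Q"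
  shows "Xterm M n k E \<phi> \<psi> \<kappa> U Y a \<in> borel_measurable (FG Q)"
proof -
  have "(\<lambda>\<omega>. Tterm k E \<kappa> U Y a \<omega>) \<in> borel_measurable (FG Q)"
    unfolding T_eq by (rule borel_measurable_prod) (use tq_FG[OF Q] E in auto)
  then show ?thesis unfolding Xterm_def using Phi_FG[OF Q a psm] by measurable
qed

context
  fixes FI :: "nat set" and kf :: "nat \<Rightarrow> nat" and Ef :: "nat \<Rightarrow> (nat \<times> nat) set"
    and phf :: "nat \<Rightarrow> (nat \<Rightarrow> real) \<Rightarrow> real" and psf :: "nat \<Rightarrow> (nat \<Rightarrow> real) \<Rightarrow> real"
    and cf :: "nat \<Rightarrow> nat \<Rightarrow> nat" and cps :: "nat \<Rightarrow> real"
  assumes FI: "finite FI"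
    and Ef: "\<And>f. f \<in> FI \<Longrightarrow> Ef f \<subseteq> {(v, w). 1 \<le> v \<and> v < w \<and> w \<le> kf f}"
    and cf: "\<And>f. f \<in> FI \<Longrightarrow> cf f \<in> Iset n (kf f)"
    and psm: "\<And>f. f \<in> FI \<Longrightarrow> psf f \<in> borel_measurable (restrict_space (PiM {1..kf f} (\<lambda>_. borel)) (cube (kf f)))"
    and psb: "\<And>f x. f \<in> FI \<Longrightarrow> x \<in> cube (kf f) \<Longrightarrow> \<bar>psf f x\<bar> \<le> cps f"
begin

definition "ES f = (if 2 \<le> kf f then Ef f else {})"
definition "img f e = (cf f (fst e), cf f (snd e))"
definition "coef f = 1 / sqrt (real (n choose kf f)) * phf f (scaled n (kf f) (cf f))"
definition "XP \<omega> = (\<Prod>f\<in>FI. Xterm M n (kf f) (Ef f) (phf f) (psf f) \<kappa> U Y (cf f) \<omega>)"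
definition "bX f = \<bar>coef f\<bar> * (2 * cps f) * (\<bar>B\<bar> + 1) ^ card (ES f)"

lemma ES_fin: "f \<in> FI \<Longrightarrow> finite (ES f)"
proof -
  assume f: "f \<in> FI"
  have "Ef f \<subseteq> {1..kf f} \<times> {1..kf f}" using Ef[OF f] by auto
  then show ?thesis unfolding ES_def by (auto intro: finite_subset)
qed

lemma img_J: "f \<in> FI \<Longrightarrow> e \<in> ES f \<Longrightarrow> img f e \<in> J"
proof -
  assume f: "f \<in> FI" and e: "e \<in> ES f"
  have "e \<in> Ef f" using e unfolding ES_def by (auto split: if_splits)
  then obtain v w where "e = (v, w)" "1 \<le> v" "v < w" "w \<le> kf f" using Ef[OF f] by blast
  then show ?thesis unfolding img_def using Iset_J[OF cf[OF f]] by simp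
qed

lemma XP_eq: "XP \<omega> = (\<Prod>f\<in>FI. coef f * Phiterm M (kf f) (psf f) U (cf f) \<omega>) *
    (\<Prod>z\<in>Sigma FI ES. tq (img (fst z) (snd z)) \<omega>)"
proof -
  have "XP \<omega> = (\<Prod>f\<in>FI. (coef f * Phiterm M (kf f) (psf f) U (cf f) \<omega>) * (\<Prod>e\<in>ES f. tq (img f e) \<omega>))"
    unfolding XP_def Xterm_def T_eq coef_def ES_def img_def by (simp add: mult_ac)
  also have "\<dots> = (\<Prod>f\<in>FI. coef f * Phiterm M (kf f) (psf f) U (cf f) \<omega>) * (\<Prod>f\<in>FI. \<Prod>e\<in>ES f. tq (img f e) \<omega>)"
    by (rule prod.distrib)
  also have "(\<Prod>f\<in>FI. \<Prod>e\<in>ES f. tq (img f e) \<omega>) = (\<Prod>z\<in>Sigma FI ES. tq (img (fst z) (snd z)) \<omega>)"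
    using prod.Sigma[OF FI, of ES "\<lambda>f e. tq (img f e) \<omega>"] ES_fin by (simp add: split_beta)
  finally show ?thesis .
qed

lemma XP_meas: "XP \<in> borel_measurable M"
proof -
  have JJ: "J \<subseteq> J" by simp
  have "XP \<in> borel_measurable (FG J)"
    unfolding XP_def[abs_def]
    by (rule borel_measurable_prod) (use X_FG[OF JJ cf psm] img_J in \<open>auto simp: ES_def img_def\<close>)
  then show ?thesis by (rule measurable_from_subalg[OF FG_sub[OF JJ]])
qed

lemma Phi_part_bdd: "\<omega> \<in> space M \<Longrightarrow> \<bar>\<Prod>f\<in>FI. coef f * Phiterm M (kf f) (psf f) U (cf f) \<omega>\<bar> \<le> (\<Prod>f\<in>FI. \<bar>coef f\<bar> * (2 * cps f))"
  unfolding abs_prod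
  by (rule prod_mono) (use Phi_bdd[OF cf psm psb] in \<open>auto simp: abs_mult intro: mult_left_mono\<close>)

lemma XP_bdd: "\<omega> \<in> space M \<Longrightarrow> \<bar>XP \<omega>\<bar> \<le> (\<Prod>f\<in>FI. bX f)"
proof -
  assume \<omega>: "\<omega> \<in> space M"
  have "\<bar>XP \<omega>\<bar> = (\<Prod>f\<in>FI. \<bar>coef f * Phiterm M (kf f) (psf f) U (cf f) \<omega>\<bar> * (\<Prod>e\<in>ES f. \<bar>tq (img f e) \<omega>\<bar>))"
    unfolding XP_def Xterm_def T_eq coef_def ES_def img_def by (simp add: abs_mult abs_prod mult_ac)
  also have "\<dots> \<le> (\<Prod>f\<in>FI. bX f)"
  proof (rule prod_mono)
    fix f assume f: "f \<in> FI"
    have a: "\<bar>coef f * Phiterm M (kf f) (psf f) U (cf f) \<omega>\<bar> \<le> \<bar>coef f\<bar> * (2 * cps f)"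
      using Phi_bdd[OF cf[OF f] psm[OF f] psb[OF f] \<omega>] by (auto simp: abs_mult intro: mult_left_mono)
    have b: "(\<Prod>e\<in>ES f. \<bar>tq (img f e) \<omega>\<bar>) \<le> (\<Prod>e\<in>ES f. \<bar>B\<bar> + 1)"
      by (rule prod_mono) (use tq_bdd img_J[OF f] \<omega> in auto)
    have "0 \<le> (\<Prod>e\<in>ES f. \<bar>tq (img f e) \<omega>\<bar>)" by (simp add: prod_nonneg)
    moreover have "0 \<le> \<bar>coef f\<bar> * (2 * cps f)" using a by linarith
    ultimately show "0 \<le> \<bar>coef f * Phiterm M (kf f) (psf f) U (cf f) \<omega>\<bar> * (\<Prod>e\<in>ES f. \<bar>tq (img f e) \<omega>\<bar>) \<and>
        \<bar>coef f * Phiterm M (kf f) (psf f) U (cf f) \<omega>\<bar> * (\<Prod>e\<in>ES f. \<bar>tq (img f e) \<omega>\<bar>) \<le> bX f"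
      using a b unfolding bX_def by (auto intro: mult_mono)
  qed
  finally show ?thesis .
qed

lemma XP_int: "integrable M XP"
  by (rule bint[OF XP_meas XP_bdd])

lemma XP_zero:
  assumes f0: "f0 \<in> FI" and e0: "e0 \<in> ES f0"
    and uniq: "\<And>z. z \<in> Sigma FI ES \<Longrightarrow> z \<noteq> (f0, e0) \<Longrightarrow> img (fst z) (snd z) \<noteq> img f0 e0"
  shows "integral\<^sup>L M XP = 0"
proof -
  define p where "p = img f0 e0"
  have p: "p \<in> J" unfolding p_def by (rule img_J[OF f0 e0])
  define SG where "SG = Sigma FI ES - {(f0, e0)}"
  define G where "G \<omega> = (\<Prod>f\<in>FI. coef f * Phiterm M (kf f) (psf f) U (cf f) \<omega>) * (\<Prod>z\<in>SG. tq (img (fst z) (snd z)) \<omega>)" for \<omega>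
  have finS: "finite (Sigma FI ES)" using FI ES_fin by auto
  have mem: "(f0, e0) \<in> Sigma FI ES" using f0 e0 by auto
  have eq: "XP \<omega> = G \<omega> * (YY p \<omega> - kp p \<omega>)" for \<omega>
  proof -
    have "(\<Prod>z\<in>Sigma FI ES. tq (img (fst z) (snd z)) \<omega>) = tq p \<omega> * (\<Prod>z\<in>SG. tq (img (fst z) (snd z)) \<omega>)"
      unfolding SG_def p_def using prod.remove[OF finS mem, of "\<lambda>z. tq (img (fst z) (snd z)) \<omega>"] by simp
    then show ?thesis unfolding XP_eq G_def tq_def by (simp add: mult_ac)
  qed
  have QJ: "J - {p} \<subseteq> J" by auto
  have SGimg: "z \<in> SG \<Longrightarrow> img (fst z) (snd z) \<in> J - {p}" for z
  proof -
    assume z: "z \<in> SG"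
    then have z1: "z \<in> Sigma FI ES" "z \<noteq> (f0, e0)" unfolding SG_def by auto
    then have "fst z \<in> FI" "snd z \<in> ES (fst z)" by auto
    then have "img (fst z) (snd z) \<in> J" by (rule img_J)
    moreover have "img (fst z) (snd z) \<noteq> p" unfolding p_def by (rule uniq[OF z1])
    ultimately show ?thesis by simp
  qed
  have Gm: "G \<in> borel_measurable (FG (J - {p}))"
    unfolding G_def[abs_def]
    by (intro borel_measurable_times borel_measurable_prod borel_measurable_const)
       (use Phi_FG[OF QJ cf psm] tq_FG[OF QJ] SGimg in auto)
  have Gb: "\<bar>G \<omega>\<bar> \<le> (\<Prod>f\<in>FI. \<bar>coef f\<bar> * (2 * cps f)) * (\<Prod>z\<in>SG. \<bar>B\<bar> + 1)" if \<omega>: "\<omega> \<in> space M" for \<omega>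
  proof -
    have b: "\<bar>\<Prod>z\<in>SG. tq (img (fst z) (snd z)) \<omega>\<bar> \<le> (\<Prod>z\<in>SG. \<bar>B\<bar> + 1)"
      unfolding abs_prod by (rule prod_mono) (use tq_bdd SGimg \<omega> in auto)
    have a: "\<bar>\<Prod>f\<in>FI. coef f * Phiterm M (kf f) (psf f) U (cf f) \<omega>\<bar> \<le> (\<Prod>f\<in>FI. \<bar>coef f\<bar> * (2 * cps f))"
      by (rule Phi_part_bdd[OF \<omega>])
    show ?thesis unfolding G_def abs_mult
      by (rule mult_mono[OF a b]) (use a in auto)
  qed
  have "integral\<^sup>L M XP = (\<integral>\<omega>. G \<omega> * (YY p \<omega> - kp p \<omega>) \<partial>M)" unfolding eq ..
  also have "\<dots> = 0" by (rule ZERO[OF p Gm Gb])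
  finally show ?thesis .
qed

lemma XP_int': "integrable M (\<lambda>\<omega>. \<Prod>f\<in>FI. Xterm M n (kf f) (Ef f) (phf f) (psf f) \<kappa> U Y (cf f) \<omega>)"
  using XP_int unfolding XP_def[abs_def] .

lemma XP_bdd': "\<bar>\<integral>\<omega>. (\<Prod>f\<in>FI. Xterm M n (kf f) (Ef f) (phf f) (psf f) \<kappa> U Y (cf f) \<omega>) \<partial>M\<bar>
   \<le> (\<Prod>f\<in>FI. \<bar>1 / sqrt (real (n choose kf f)) * phf f (scaled n (kf f) (cf f))\<bar> * (2 * cps f) *
        (\<bar>B\<bar> + 1) ^ card (if 2 \<le> kf f then Ef f else {}))"
  using abs_int_le[OF XP_int XP_bdd] unfolding XP_def[abs_def] bX_def coef_def ES_def by simp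

lemma XP_zero':
  assumes "f0 \<in> FI" "2 \<le> kf f0" "e0 \<in> Ef f0"
    and "\<And>f e. f \<in> FI \<Longrightarrow> 2 \<le> kf f \<Longrightarrow> e \<in> Ef f \<Longrightarrow> (f, e) \<noteq> (f0, e0) \<Longrightarrow>
       (cf f (fst e), cf f (snd e)) \<noteq> (cf f0 (fst e0), cf f0 (snd e0))"
  shows "(\<integral>\<omega>. (\<Prod>f\<in>FI. Xterm M n (kf f) (Ef f) (phf f) (psf f) \<kappa> U Y (cf f) \<omega>) \<partial>M) = 0"
proof -
  have "integral\<^sup>L M XP = 0"
  proof (rule XP_zero)
    show "f0 \<in> FI" by fact
    show "e0 \<in> ES f0" unfolding ES_def using assms by simp
    fix z assume "z \<in> Sigma FI ES" "z \<noteq> (f0, e0)"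
    then show "img (fst z) (snd z) \<noteq> img f0 e0"
      using assms(4)[of "fst z" "snd z"] unfolding ES_def img_def by (auto split: if_splits)
  qed
  then show ?thesis unfolding XP_def[abs_def] .
qed

end

end


lemma Iset_inj: "a \<in> Iset n k \<Longrightarrow> inj_on a {1..k}"
proof (rule inj_onI)
  fix x y assume a: "a \<in> Iset n k" and xy: "x \<in> {1..k}" "y \<in> {1..k}" "a x = a y"
  show "x = y"
  proof (rule ccontr)
    assume "x \<noteq> y"
    then have "x < y \<or> y < x" by arith
    moreover have "\<forall>j\<in>{1..k}. \<forall>l\<in>{1..k}. j < l \<longrightarrow> a j < a l" using a unfolding Iset_def by blast
    ultimately show False using xy by (metis less_irrefl)
  qed
qed

lemma Iset_le: "a \<in> Iset n k \<Longrightarrow> k \<le> n"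
proof -
  assume a: "a \<in> Iset n k"
  have "a ` {1..k} \<subseteq> {1..n}" using a unfolding Iset_def PiE_def Pi_def by auto
  then have "card (a ` {1..k}) \<le> n" using card_mono[of "{1..n}"] by fastforce
  then show ?thesis using card_image[OF Iset_inj[OF a]] by simp
qed

lemma Iset_edge_inj:
  assumes a: "a \<in> Iset n k" and e: "e \<in> {(v, w). 1 \<le> v \<and> v < w \<and> w \<le> k}" and e': "e' \<in> {(v, w). 1 \<le> v \<and> v < w \<and> w \<le> k}"
    and eq: "a (fst e) = a (fst e')" "a (snd e) = a (snd e')"
  shows "e = e'"
proof -
  have "fst e = fst e'" using inj_onD[OF Iset_inj[OF a] eq(1)] e e' by auto
  moreover have "snd e = snd e'" using inj_onD[OF Iset_inj[OF a] eq(2)] e e' by auto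
  ultimately show ?thesis by (simp add: prod_eq_iff)
qed

lemma incident_edge:
  assumes c: "connected_graph_on k E" and k: "2 \<le> k" and j: "j \<in> {1..k}"
  shows "\<exists>e\<in>E. j = fst e \<or> j = snd e"
proof -
  obtain j' where j': "j' \<in> {1..k}" "j' \<noteq> j"
  proof (cases "j = 1")
    case True then show ?thesis using k by (intro that[of 2]) auto
  next
    case False then show ?thesis using k by (intro that[of 1]) auto
  qed
  have "(j, j') \<in> (E \<union> E\<inverse>)\<^sup>*" using c j j' unfolding connected_graph_on_def by blast
  then show ?thesis
  proof (rule converse_rtranclE)
    assume "j = j'" then show ?thesis using j' by simp
  next
    fix y assume "(j, y) \<in> E \<union> E\<inverse>"
    then show ?thesis by force
  qed
qed

lemma sum_if_card: "finite X \<Longrightarrow> (\<Sum>x\<in>X. if x \<in> B then 1 else 0 :: nat) = card (X \<inter> B)"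
proof -
  assume "finite X"
  then have "(\<Sum>x\<in>X. if x \<in> B then 1 else 0 :: nat) = (\<Sum>x\<in>{x\<in>X. x \<in> B}. 1)"
    using sum.inter_filter[of X "\<lambda>_. 1::nat" "\<lambda>x. x \<in> B"] by simp
  also have "{x\<in>X. x \<in> B} = X \<inter> B" by auto
  finally show ?thesis by simp
qed

lemma comb:
  fixes K m n :: nat and kl :: "nat \<Rightarrow> nat" and E0 :: "(nat \<times> nat) set"
    and El :: "nat \<Rightarrow> (nat \<times> nat) set" and a :: "nat \<Rightarrow> nat" and bs :: "nat \<Rightarrow> nat \<Rightarrow> nat"
  assumes m: "1 \<le> m" and K: "1 \<le> K" and a: "a \<in> Iset n K" and c0: "connected_graph_on K E0"
    and cl: "\<And>l. l \<in> {1..m} \<Longrightarrow> connected_graph_on (kl l) (El l)"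
    and bs: "\<And>l. l \<in> {1..m} \<Longrightarrow> bs l \<in> Nset n K (kl l) a"
    and cov0: "\<And>e. e \<in> E0 \<Longrightarrow> 2 \<le> K \<Longrightarrow> \<exists>l\<in>{1..m}. a (fst e) \<in> bs l ` {1..kl l} \<and> a (snd e) \<in> bs l ` {1..kl l}"
    and covl: "\<And>l e. l \<in> {1..m} \<Longrightarrow> e \<in> El l \<Longrightarrow> 2 \<le> kl l \<Longrightarrow>
       (bs l (fst e) \<in> a ` {1..K} \<and> bs l (snd e) \<in> a ` {1..K}) \<or>
       (\<exists>l'\<in>{1..m}. l' \<noteq> l \<and> bs l (fst e) \<in> bs l' ` {1..kl l'} \<and> bs l (snd e) \<in> bs l' ` {1..kl l'})"
  shows "2 * card (a ` {1..K} \<union> (\<Union>l\<in>{1..m}. bs l ` {1..kl l})) + m \<le> K + (\<Sum>l\<in>{1..m}. kl l) + 1"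
proof -
  define A where "A = a ` {1..K}"
  define Bl where "Bl l = bs l ` {1..kl l}" for l
  define W where "W = A \<union> (\<Union>l\<in>{1..m}. Bl l)"
  have bI: "\<And>l. l \<in> {1..m} \<Longrightarrow> bs l \<in> Iset n (kl l)" using bs unfolding Nset_def by auto
  have sge: "\<And>l. l \<in> {1..m} \<Longrightarrow> min 2 K \<le> card (A \<inter> Bl l)"
    using bs unfolding Nset_def A_def Bl_def by auto
  have finA: "finite A" unfolding A_def by simp
  have finB: "\<And>l. finite (Bl l)" unfolding Bl_def by simp
  have finW: "finite W" unfolding W_def using finA finB by auto
  have cA: "card A = K" unfolding A_def using card_image[OF Iset_inj[OF a]] by simp
  have cB: "\<And>l. l \<in> {1..m} \<Longrightarrow> card (Bl l) = kl l" unfolding Bl_def using card_image[OF Iset_inj[OF bI]] by simp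
  have E0sub: "E0 \<subseteq> {(v, w). 1 \<le> v \<and> v < w \<and> w \<le> K}" using c0 unfolding connected_graph_on_def graph_on_def by auto
  have claim1: "K + m \<le> (\<Sum>l\<in>{1..m}. card (A \<inter> Bl l)) + 1"
  proof (cases "K = 1")
    case True
    have "\<And>l. l \<in> {1..m} \<Longrightarrow> 1 \<le> card (A \<inter> Bl l)" using sge True by force
    then have "of_nat (card {1..m}) * 1 \<le> (\<Sum>l\<in>{1..m}. card (A \<inter> Bl l))" by (rule sum_bounded_below)
    then show ?thesis using True by simp
  next
    case False
    then have K2: "2 \<le> K" using K by simp
    define S where "S l = A \<inter> Bl l" for l
    have edge_rel: "(a (fst e), a (snd e)) \<in> hrel {1..m} S" if e: "e \<in> E0" for e
    proof -
      obtain l where l: "l \<in> {1..m}" "a (fst e) \<in> Bl l" "a (snd e) \<in> Bl l" using cov0[OF e K2] unfolding Bl_def by blast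
      have "fst e \<in> {1..K}" "snd e \<in> {1..K}" using E0sub e by auto
      then have "a (fst e) \<in> A" "a (snd e) \<in> A" unfolding A_def by auto
      then show ?thesis unfolding hrel_def S_def using l by blast
    qed
    have UA: "\<Union>(S ` {1..m}) = A"
    proof
      show "\<Union>(S ` {1..m}) \<subseteq> A" unfolding S_def by auto
      show "A \<subseteq> \<Union>(S ` {1..m})"
      proof
        fix x assume "x \<in> A"
        then obtain v where v: "v \<in> {1..K}" "x = a v" unfolding A_def by auto
        obtain e where e: "e \<in> E0" "v = fst e \<or> v = snd e" using incident_edge[OF c0 K2 v(1)] by blast
        then show "x \<in> \<Union>(S ` {1..m})" using edge_rel[OF e(1)] v unfolding hrel_def by auto
      qed
    qed
    have conn: "(x, y) \<in> (hrel {1..m} S)\<^sup>*" if xy: "x \<in> \<Union>(S ` {1..m})" "y \<in> \<Union>(S ` {1..m})" for x y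
    proof -
      obtain v w where vw: "v \<in> {1..K}" "w \<in> {1..K}" "x = a v" "y = a w" 
      proof -
        have "x \<in> a ` {1..K}" "y \<in> a ` {1..K}" using xy UA unfolding A_def by auto
        then show ?thesis using that by blast
      qed
      have "(v, w) \<in> (E0 \<union> E0\<inverse>)\<^sup>*" using c0 vw unfolding connected_graph_on_def by blast
      then have "(a v, a w) \<in> (hrel {1..m} S)\<^sup>*"
      proof (induction rule: rtrancl_induct)
        case base then show ?case by simp
      next
        case (step y z)
        have "(a y, a z) \<in> hrel {1..m} S"
        proof (cases "(y, z) \<in> E0")
          case True then show ?thesis using edge_rel by force
        next
          case False
          then have "(z, y) \<in> E0" using step.hyps(2) by auto
          then have "(a z, a y) \<in> hrel {1..m} S" using edge_rel by force
          then show ?thesis unfolding hrel_def by blast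
        qed
        with step.IH show ?case by (rule rtrancl_into_rtrancl)
      qed
      then show ?thesis using vw by simp
    qed
    have "card (\<Union>(S ` {1..m})) + card {1..m} \<le> (\<Sum>l\<in>{1..m}. card (S l)) + 1"
    proof (rule hyper_card)
      show "\<And>l. l \<in> {1..m} \<Longrightarrow> finite (S l) \<and> S l \<noteq> {}"
      proof
        fix l assume l: "l \<in> {1..m}"
        show "finite (S l)" unfolding S_def using finA by simp
        have "2 \<le> card (S l)" using sge[OF l] K2 unfolding S_def by simp
        then show "S l \<noteq> {}" by auto
      qed
    qed (use m conn in auto)
    then show ?thesis using UA cA unfolding S_def by simp
  qed
  have two: "2 \<le> card {l\<in>{1..m}. x \<in> Bl l}" if x: "x \<in> W - A" for x
  proof -
    obtain l1 where l1: "l1 \<in> {1..m}" "x \<in> Bl l1" using x unfolding W_def by auto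
    obtain j where j: "j \<in> {1..kl l1}" "x = bs l1 j" using l1 unfolding Bl_def by auto
    have k2: "2 \<le> kl l1"
    proof (rule ccontr)
      assume "\<not> 2 \<le> kl l1"
      then have "kl l1 = 1" using j by auto
      then have "Bl l1 = {x}" using j unfolding Bl_def by auto
      moreover have "1 \<le> card (A \<inter> Bl l1)" using sge[OF l1(1)] K by linarith
      ultimately have "x \<in> A" by (metis card.empty Int_empty_right Int_insert_right not_one_le_zero)
      then show False using x by simp
    qed
    obtain e where e: "e \<in> El l1" "j = fst e \<or> j = snd e" using incident_edge[OF cl[OF l1(1)] k2 j(1)] by blast
    have "\<not> (bs l1 (fst e) \<in> A \<and> bs l1 (snd e) \<in> A)" using e j x by auto
    then obtain l2 where l2: "l2 \<in> {1..m}" "l2 \<noteq> l1" "bs l1 (fst e) \<in> Bl l2" "bs l1 (snd e) \<in> Bl l2"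
      using covl[OF l1(1) e(1) k2] unfolding A_def Bl_def by blast
    have "x \<in> Bl l2" using l2 e j by auto
    then have "{l1, l2} \<subseteq> {l\<in>{1..m}. x \<in> Bl l}" using l1 l2 by auto
    then have "card {l1, l2} \<le> card {l\<in>{1..m}. x \<in> Bl l}" by (rule card_mono[rotated]) simp
    then show ?thesis using l2 by simp
  qed
  have claim2: "2 * card (W - A) \<le> (\<Sum>l\<in>{1..m}. card (Bl l - A))"
  proof -
    have "(\<Sum>l\<in>{1..m}. card (Bl l - A)) = (\<Sum>l\<in>{1..m}. \<Sum>x\<in>W - A. if x \<in> Bl l then 1 else 0)"
    proof (rule sum.cong)
      fix l assume l: "l \<in> {1..m}"
      have "Bl l - A = (W - A) \<inter> Bl l" unfolding W_def using l by auto
      then show "card (Bl l - A) = (\<Sum>x\<in>W - A. if x \<in> Bl l then 1 else 0)"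
        using sum_if_card[of "W - A" "Bl l"] finW by simp
    qed simp
    also have "\<dots> = (\<Sum>x\<in>W - A. \<Sum>l\<in>{1..m}. if x \<in> Bl l then 1 else 0)" by (rule sum.swap)
    also have "\<dots> = (\<Sum>x\<in>W - A. card {l\<in>{1..m}. x \<in> Bl l})"
    proof (rule sum.cong)
      fix x
      have "(\<Sum>l\<in>{1..m}. if l \<in> {l. x \<in> Bl l} then 1 else 0) = card ({1..m} \<inter> {l. x \<in> Bl l})"
        by (rule sum_if_card) simp
      moreover have "{1..m} \<inter> {l. x \<in> Bl l} = {l\<in>{1..m}. x \<in> Bl l}" by auto
      ultimately show "(\<Sum>l\<in>{1..m}. if x \<in> Bl l then 1 else 0) = card {l\<in>{1..m}. x \<in> Bl l}" by simp
    qed simp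
    also have "\<dots> \<ge> (\<Sum>x\<in>W - A. 2)" by (rule sum_mono) (rule two)
    finally show ?thesis by (simp add: mult.commute)
  qed
  have cW: "card W = K + card (W - A)"
  proof -
    have "A \<subseteq> W" unfolding W_def by auto
    then have "card (W - A) = card W - card A" using finA by (simp add: card_Diff_subset)
    moreover have "card A \<le> card W" using \<open>A \<subseteq> W\<close> finW card_mono by blast
    ultimately show ?thesis using cA by simp
  qed
  have dl: "card (Bl l - A) + card (A \<inter> Bl l) = kl l" if l: "l \<in> {1..m}" for l
  proof -
    have "card (Bl l - A) = card (Bl l) - card (Bl l \<inter> A)" using finB by (simp add: card_Diff_subset_Int)
    moreover have "card (Bl l \<inter> A) \<le> card (Bl l)" using finB card_mono by (metis Int_lower1)
    ultimately show ?thesis using cB[OF l] by (simp add: Int_commute)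
  qed
  have sums: "(\<Sum>l\<in>{1..m}. card (Bl l - A)) + (\<Sum>l\<in>{1..m}. card (A \<inter> Bl l)) = (\<Sum>l\<in>{1..m}. kl l)"
    unfolding sum.distrib[symmetric] using dl by (rule sum.cong[OF refl])
  have "2 * card W + m \<le> K + (\<Sum>l\<in>{1..m}. kl l) + 1"
    using claim1 claim2 cW sums by linarith
  then show ?thesis unfolding W_def A_def Bl_def .
qed

lemma card_small_subsets:
  assumes n: "1 \<le> n"
  shows "card {W. W \<subseteq> {1..n::nat} \<and> card W \<le> V} \<le> (V + 1) * n ^ V"
proof -
  have eq: "{W. W \<subseteq> {1..n} \<and> card W \<le> V} = (\<Union>v\<in>{..V}. {W. W \<subseteq> {1..n} \<and> card W = v})" by auto
  have "card {W. W \<subseteq> {1..n} \<and> card W \<le> V} \<le> (\<Sum>v\<in>{..V}. card {W. W \<subseteq> {1..n} \<and> card W = v})"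
    unfolding eq by (rule card_UN_le) simp
  also have "\<dots> = (\<Sum>v\<in>{..V}. n choose v)" using n_subsets[of "{1..n}"] by simp
  also have "\<dots> \<le> (\<Sum>v\<in>{..V}. n ^ V)"
  proof (rule sum_mono)
    fix v assume v: "v \<in> {..V}"
    have "n choose v \<le> n ^ v"
      by (cases "v \<le> n") (auto simp: binomial_le_pow binomial_eq_0)
    also have "\<dots> \<le> n ^ V" using v n by (intro power_increasing) auto
    finally show "n choose v \<le> n ^ V" .
  qed
  also have "\<dots> = (V + 1) * n ^ V" by simp
  finally show ?thesis .
qed

lemma card_Cfg:
  assumes "finite W"
  shows "card (PiE {1..K} (\<lambda>_. W) \<times> PiE {1..m} (\<lambda>l. PiE {1..kl l} (\<lambda>_. W)))
     = card W ^ (K + (\<Sum>l\<in>{1..m::nat}. kl l))"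
proof -
  have "card (PiE {1..m} (\<lambda>l. PiE {1..kl l} (\<lambda>_. W))) = (\<Prod>l\<in>{1..m}. card W ^ kl l)"
    by (simp add: card_PiE)
  also have "\<dots> = card W ^ (\<Sum>l\<in>{1..m}. kl l)" by (simp add: power_sum)
  finally show ?thesis by (simp add: card_cartesian_product card_PiE power_add)
qed

lemma inv_sqrt_binom:
  assumes k: "1 \<le> k" and kn: "k \<le> n"
  shows "1 / sqrt (real (n choose k)) \<le> real k powr (real k / 2) * real n powr (- (real k / 2))"
proof -
  define x where "x = real n / real k"
  have x0: "0 < x" unfolding x_def using k kn by auto
  have b: "x ^ k \<le> real (n choose k)" unfolding x_def by (rule binomial_ge_n_over_k_pow_k[OF kn])
  have sx: "sqrt (x ^ k) = x powr (real k / 2)"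
  proof -
    have "sqrt (x ^ k) = (x ^ k) powr (1 / 2)" using x0 by (simp add: powr_half_sqrt)
    also have "\<dots> = (x powr real k) powr (1 / 2)" using x0 by (simp add: powr_realpow)
    also have "\<dots> = x powr (real k / 2)" by (simp add: powr_powr)
    finally show ?thesis .
  qed
  have p0: "0 < x powr (real k / 2)" using x0 by simp
  have "x powr (real k / 2) \<le> sqrt (real (n choose k))" using b sx by (metis real_sqrt_le_mono)
  then have "1 / sqrt (real (n choose k)) \<le> 1 / x powr (real k / 2)"
  proof (rule divide_left_mono)
    have s0: "0 < sqrt (real (n choose k))" using p0 \<open>x powr (real k / 2) \<le> sqrt (real (n choose k))\<close> by linarith
    show "0 < sqrt (real (n choose k)) * x powr (real k / 2)" using mult_pos_pos[OF s0 p0] .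
  qed (use \<open>x powr (real k / 2) \<le> sqrt (real (n choose k))\<close> in auto)
  also have "1 / x powr (real k / 2) = real k powr (real k / 2) * real n powr (- (real k / 2))"
    unfolding x_def using k kn by (simp add: powr_divide powr_minus divide_simps)
  finally show ?thesis .
qed


lemma scaled_D: "a \<in> Iset n k \<Longrightarrow> scaled n k a \<in> Dsimplex k"
proof -
  assume a: "a \<in> Iset n k"
  have r: "\<And>j. j \<in> {1..k} \<Longrightarrow> 1 \<le> a j \<and> a j \<le> n" using a unfolding Iset_def PiE_def Pi_def by auto
  have mo: "\<And>j l. j \<in> {1..k} \<Longrightarrow> l \<in> {1..k} \<Longrightarrow> j \<le> l \<Longrightarrow> a j \<le> a l"
    using a unfolding Iset_def by (metis (no_types, lifting) le_eq_less_or_eq mem_Collect_eq)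
  have "scaled n k a \<in> cube k"
    unfolding cube_def scaled_def using r by (auto simp: PiE_iff divide_le_eq_1)
  moreover have "\<forall>j\<in>{1..k}. \<forall>l\<in>{1..k}. j \<le> l \<longrightarrow> scaled n k a j \<le> scaled n k a l"
    unfolding scaled_def using mo by (auto intro: divide_right_mono)
  ultimately show ?thesis unfolding Dsimplex_def by simp
qed

theorem lemma5:
  fixes d m i :: nat and ii :: "nat \<Rightarrow> nat"
    and k :: "nat \<Rightarrow> nat" and F :: "nat \<Rightarrow> (nat \<times> nat) set"
    and \<phi> \<psi> :: "nat \<Rightarrow> (nat \<Rightarrow> real) \<Rightarrow> real"
    and \<kappa> :: "real \<Rightarrow> real \<Rightarrow> real" and B :: real
    and M :: "nat \<Rightarrow> 'o measure"
    and U :: "nat \<Rightarrow> nat \<Rightarrow> 'o \<Rightarrow> real"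
    and Y :: "nat \<Rightarrow> nat \<Rightarrow> nat \<Rightarrow> 'o \<Rightarrow> real"
  assumes d: "d \<ge> 1"
    and k: "\<And>j. j \<in> {1..d} \<Longrightarrow> k j \<ge> 1"
    and F: "\<And>j. j \<in> {1..d} \<Longrightarrow> connected_graph_on (k j) (F j)"
    and \<phi>_meas: "\<And>j. j \<in> {1..d} \<Longrightarrow>
        \<phi> j \<in> borel_measurable (restrict_space (PiM {1..k j} (\<lambda>_. borel)) (Dsimplex (k j)))"
    and \<phi>_bdd: "\<And>j. j \<in> {1..d} \<Longrightarrow> \<exists>c. \<forall>x\<in>Dsimplex (k j). \<bar>\<phi> j x\<bar> \<le> c"
    and \<psi>_meas: "\<And>j. j \<in> {1..d} \<Longrightarrow>
        \<psi> j \<in> borel_measurable (restrict_space (PiM {1..k j} (\<lambda>_. borel)) (cube (k j)))"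
    and \<psi>_bdd: "\<And>j. j \<in> {1..d} \<Longrightarrow> \<exists>c. \<forall>x\<in>cube (k j). \<bar>\<psi> j x\<bar> \<le> c"
    and \<kappa>: "graphon \<kappa>"
    and M: "\<And>n. n \<ge> 1 \<Longrightarrow> prob_space (M n)"
    and U_meas: "\<And>n v. n \<ge> 1 \<Longrightarrow> v \<in> {1..n} \<Longrightarrow> U n v \<in> borel_measurable (M n)"
    and U_range: "\<And>n v \<omega>. n \<ge> 1 \<Longrightarrow> v \<in> {1..n} \<Longrightarrow> \<omega> \<in> space (M n) \<Longrightarrow> U n v \<omega> \<in> {0..1}"
    and U_indep: "\<And>n. n \<ge> 1 \<Longrightarrow> prob_space.indep_vars (M n) (\<lambda>_. borel) (U n) {1..n}"
    and Y_meas: "\<And>n v w. n \<ge> 1 \<Longrightarrow> 1 \<le> v \<Longrightarrow> v < w \<Longrightarrow> w \<le> n \<Longrightarrow>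
        Y n v w \<in> borel_measurable (M n)"
    and Y_bdd: "\<And>n v w \<omega>. n \<ge> 1 \<Longrightarrow> 1 \<le> v \<Longrightarrow> v < w \<Longrightarrow> w \<le> n \<Longrightarrow>
        \<omega> \<in> space (M n) \<Longrightarrow> \<bar>Y n v w \<omega>\<bar> \<le> B"
    and Y_condexp: "\<And>n v w. n \<ge> 1 \<Longrightarrow> 1 \<le> v \<Longrightarrow> v < w \<Longrightarrow> w \<le> n \<Longrightarrow>
        AE \<omega> in M n. real_cond_exp (M n) (sigmaU (M n) n (U n)) (Y n v w) \<omega>
                       = \<kappa> (U n v \<omega>) (U n w \<omega>)"
    and Y_condindep: "\<And>n. n \<ge> 1 \<Longrightarrow>
        cond_indep_vars (M n) (sigmaU (M n) n (U n)) (\<lambda>(v, w). Y n v w)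
          {(v, w). 1 \<le> v \<and> v < w \<and> w \<le> n}"
    and m: "m \<ge> 2"
    and i: "i \<in> {1..d}"
    and ii: "\<And>l. l \<in> {1..m} \<Longrightarrow> ii l \<in> {1..d}"
  shows "\<exists>C>0. \<forall>n\<ge>1.
    \<bar>\<integral>\<omega>. (\<Sum>a\<in>Iset n (k i). \<Sum>bs\<in>PiE {1..m} (\<lambda>l. Nset n (k i) (k (ii l)) a).
        Xterm (M n) n (k i) (F i) (\<phi> i) (\<psi> i) \<kappa> (U n) (Y n) a \<omega> *
        (\<Prod>l\<in>{1..m}. Xterm (M n) n (k (ii l)) (F (ii l)) (\<phi> (ii l)) (\<psi> (ii l)) \<kappa> (U n) (Y n) (bs l) \<omega>))
      \<partial>(M n)\<bar> \<le> C * real n powr (- (real m - 1) / 2)"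
proof -
  obtain cph where cph: "\<forall>j\<in>{1..d}. \<forall>x\<in>Dsimplex (k j). \<bar>\<phi> j x\<bar> \<le> cph j"
    using bchoice[of "{1..d}" "\<lambda>j c. \<forall>x\<in>Dsimplex (k j). \<bar>\<phi> j x\<bar> \<le> c"] \<phi>_bdd by blast
  obtain cps where cps: "\<forall>j\<in>{1..d}. \<forall>x\<in>cube (k j). \<bar>\<psi> j x\<bar> \<le> cps j"
    using bchoice[of "{1..d}" "\<lambda>j c. \<forall>x\<in>cube (k j). \<bar>\<psi> j x\<bar> \<le> c"] \<psi>_bdd by blast
  define idx where "idx f = (if f = 0 then i else ii f)" for f
  have idx: "\<And>f. f \<in> {0..m} \<Longrightarrow> idx f \<in> {1..d}" using i ii by (auto simp: idx_def)
  define kf where "kf f = k (idx f)" for f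
  define Ef where "Ef f = F (idx f)" for f
  define phf where "phf f = \<phi> (idx f)" for f
  define psf where "psf f = \<psi> (idx f)" for f
  define cpf where "cpf f = \<bar>cps (idx f)\<bar>" for f
  define cc where "cc a bs f = (if f = 0 then a else bs f)" for a :: "nat \<Rightarrow> nat" and bs :: "nat \<Rightarrow> nat \<Rightarrow> nat" and f
  define S where "S = (\<Sum>f\<in>{0..m}. kf f)"
  have ins: "{0..m} = insert 0 {1..m}" by auto
  have S_eq: "S = k i + (\<Sum>l\<in>{1..m}. k (ii l))"
  proof -
    have "S = kf 0 + (\<Sum>l\<in>{1..m}. kf l)" unfolding S_def ins by simp
    also have "(\<Sum>l\<in>{1..m}. kf l) = (\<Sum>l\<in>{1..m}. k (ii l))" by (rule sum.cong) (auto simp: kf_def idx_def)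
    finally show ?thesis by (simp add: kf_def idx_def)
  qed
  define V0 where "V0 = (S + 1 - m) div 2"
  define Cb where "Cb = (\<Prod>f\<in>{0..m}. real (kf f) powr (real (kf f) / 2) * \<bar>cph (idx f)\<bar> * (2 * cpf f) * (\<bar>B\<bar> + 1) ^ (kf f * kf f))"
  define C0 where "C0 = real (V0 + 1) * real V0 ^ S * Cb"
  have Cb0: "0 \<le> Cb" unfolding Cb_def cpf_def by (intro prod_nonneg) auto
  have C00: "0 \<le> C0" unfolding C0_def using Cb0 by simp
  have key: "\<bar>\<integral>\<omega>. (\<Sum>a\<in>Iset n (k i). \<Sum>bs\<in>PiE {1..m} (\<lambda>l. Nset n (k i) (k (ii l)) a).
        Xterm (M n) n (k i) (F i) (\<phi> i) (\<psi> i) \<kappa> (U n) (Y n) a \<omega> *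
        (\<Prod>l\<in>{1..m}. Xterm (M n) n (k (ii l)) (F (ii l)) (\<phi> (ii l)) (\<psi> (ii l)) \<kappa> (U n) (Y n) (bs l) \<omega>))
      \<partial>(M n)\<bar> \<le> C0 * real n powr (- (real m - 1) / 2)" if n: "n \<ge> 1" for n
  proof -
    interpret G: gset "M n" n "U n" "Y n" \<kappa> B
      unfolding gset_def gset_axioms_def
      using M[OF n] \<kappa> U_meas[OF n] U_range[OF n] Y_meas[OF n] Y_bdd[OF n] Y_condexp[OF n] Y_condindep[OF n]
      by blast
    define K where "K = k i"
    define CS where "CS = Sigma (Iset n K) (\<lambda>a. PiE {1..m} (\<lambda>l. Nset n K (k (ii l)) a))"
    define XPn where "XPn a bs \<omega> = (\<Prod>f\<in>{0..m}. Xterm (M n) n (kf f) (Ef f) (phf f) (psf f) \<kappa> (U n) (Y n) (cc a bs f) \<omega>)"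
      for a bs \<omega>
    have prod_eq: "Xterm (M n) n (k i) (F i) (\<phi> i) (\<psi> i) \<kappa> (U n) (Y n) a \<omega> *
        (\<Prod>l\<in>{1..m}. Xterm (M n) n (k (ii l)) (F (ii l)) (\<phi> (ii l)) (\<psi> (ii l)) \<kappa> (U n) (Y n) (bs l) \<omega>)
        = XPn a bs \<omega>" for a bs \<omega>
    proof -
      have "XPn a bs \<omega> = Xterm (M n) n (kf 0) (Ef 0) (phf 0) (psf 0) \<kappa> (U n) (Y n) (cc a bs 0) \<omega> *
          (\<Prod>l\<in>{1..m}. Xterm (M n) n (kf l) (Ef l) (phf l) (psf l) \<kappa> (U n) (Y n) (cc a bs l) \<omega>)"
        unfolding XPn_def ins by simp
      also have "(\<Prod>l\<in>{1..m}. Xterm (M n) n (kf l) (Ef l) (phf l) (psf l) \<kappa> (U n) (Y n) (cc a bs l) \<omega>)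
          = (\<Prod>l\<in>{1..m}. Xterm (M n) n (k (ii l)) (F (ii l)) (\<phi> (ii l)) (\<psi> (ii l)) \<kappa> (U n) (Y n) (bs l) \<omega>)"
        by (rule prod.cong) (auto simp: kf_def Ef_def phf_def psf_def cc_def idx_def)
      finally show ?thesis by (simp add: kf_def Ef_def phf_def psf_def cc_def idx_def)
    qed
    have kf1: "\<And>f. f \<in> {0..m} \<Longrightarrow> 1 \<le> kf f" using k idx unfolding kf_def by blast
    have Efr: "\<And>f. f \<in> {0..m} \<Longrightarrow> Ef f \<subseteq> {(v, w). 1 \<le> v \<and> v < w \<and> w \<le> kf f}"
      using F idx unfolding Ef_def kf_def connected_graph_on_def graph_on_def by blast
    have cfI: "\<And>f. z \<in> CS \<Longrightarrow> f \<in> {0..m} \<Longrightarrow> cc (fst z) (snd z) f \<in> Iset n (kf f)" for z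
      unfolding CS_def cc_def kf_def idx_def K_def Nset_def by (auto simp: PiE_iff)
    have psm: "\<And>f. f \<in> {0..m} \<Longrightarrow> psf f \<in> borel_measurable (restrict_space (PiM {1..kf f} (\<lambda>_. borel)) (cube (kf f)))"
      using \<psi>_meas idx unfolding psf_def kf_def by blast
    have psb: "\<And>f x. f \<in> {0..m} \<Longrightarrow> x \<in> cube (kf f) \<Longrightarrow> \<bar>psf f x\<bar> \<le> cpf f"
      using cps idx unfolding psf_def kf_def cpf_def by fastforce
    have finI: "finite {0..m::nat}" by simp
    have int: "integrable (M n) (XPn (fst z) (snd z))" if z: "z \<in> CS" for z
      unfolding XPn_def[abs_def] by (rule G.XP_int'[OF finI Efr cfI[OF z] psm psb])
    have bnd2: "\<bar>integral\<^sup>L (M n) (XPn (fst z) (snd z))\<bar> \<le> Cb * real n powr (- (real S / 2))" if z: "z \<in> CS" for z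
    proof -
      let ?c = "cc (fst z) (snd z)"
      have "\<bar>integral\<^sup>L (M n) (XPn (fst z) (snd z))\<bar> \<le> (\<Prod>f\<in>{0..m}. \<bar>1 / sqrt (real (n choose kf f)) * phf f (scaled n (kf f) (?c f))\<bar> * (2 * cpf f) *
        (\<bar>B\<bar> + 1) ^ card (if 2 \<le> kf f then Ef f else {}))"
        unfolding XPn_def[abs_def] by (rule G.XP_bdd'[OF finI Efr cfI[OF z] psm psb])
      also have "\<dots> \<le> (\<Prod>f\<in>{0..m}. (real (kf f) powr (real (kf f) / 2) * \<bar>cph (idx f)\<bar> * (2 * cpf f) * (\<bar>B\<bar> + 1) ^ (kf f * kf f))
           * real n powr (- (real (kf f) / 2)))"
      proof (rule prod_mono, rule conjI)
        fix f assume f: "f \<in> {0..m}"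
        show "0 \<le> \<bar>1 / sqrt (real (n choose kf f)) * phf f (scaled n (kf f) (?c f))\<bar> * (2 * cpf f) *
          (\<bar>B\<bar> + 1) ^ card (if 2 \<le> kf f then Ef f else {})" unfolding cpf_def by simp
        have I: "?c f \<in> Iset n (kf f)" by (rule cfI[OF z f])
        have kn: "kf f \<le> n" by (rule Iset_le[OF I])
        have s1: "1 / sqrt (real (n choose kf f)) \<le> real (kf f) powr (real (kf f) / 2) * real n powr (- (real (kf f) / 2))"
          by (rule inv_sqrt_binom[OF kf1[OF f] kn])
        have s2: "\<bar>phf f (scaled n (kf f) (?c f))\<bar> \<le> \<bar>cph (idx f)\<bar>"
          using cph idx[OF f] scaled_D[OF I] unfolding phf_def kf_def by fastforce
        have s3: "(\<bar>B\<bar> + 1) ^ card (if 2 \<le> kf f then Ef f else {}) \<le> (\<bar>B\<bar> + 1) ^ (kf f * kf f)"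
        proof (rule power_increasing)
          have "Ef f \<subseteq> {1..kf f} \<times> {1..kf f}" using Efr[OF f] by auto
          then have "card (Ef f) \<le> card ({1..kf f} \<times> {1..kf f})" by (rule card_mono[rotated]) simp
          then show "card (if 2 \<le> kf f then Ef f else {}) \<le> kf f * kf f" by (simp add: card_cartesian_product)
        qed simp
        have "\<bar>1 / sqrt (real (n choose kf f)) * phf f (scaled n (kf f) (?c f))\<bar> =
              1 / sqrt (real (n choose kf f)) * \<bar>phf f (scaled n (kf f) (?c f))\<bar>" by (simp add: abs_mult)
        also have "\<dots> \<le> (real (kf f) powr (real (kf f) / 2) * real n powr (- (real (kf f) / 2))) * \<bar>cph (idx f)\<bar>"
          by (rule mult_mono[OF s1 s2]) auto
        finally have s12: "\<bar>1 / sqrt (real (n choose kf f)) * phf f (scaled n (kf f) (?c f))\<bar> \<le>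
            (real (kf f) powr (real (kf f) / 2) * real n powr (- (real (kf f) / 2))) * \<bar>cph (idx f)\<bar>" .
        have "\<bar>1 / sqrt (real (n choose kf f)) * phf f (scaled n (kf f) (?c f))\<bar> * (2 * cpf f) *
            (\<bar>B\<bar> + 1) ^ card (if 2 \<le> kf f then Ef f else {}) \<le>
            ((real (kf f) powr (real (kf f) / 2) * real n powr (- (real (kf f) / 2))) * \<bar>cph (idx f)\<bar>) * (2 * cpf f) * (\<bar>B\<bar> + 1) ^ (kf f * kf f)"
          by (intro mult_mono s12 s3 order_refl) (auto simp: cpf_def)
        then show "\<bar>1 / sqrt (real (n choose kf f)) * phf f (scaled n (kf f) (?c f))\<bar> * (2 * cpf f) *
            (\<bar>B\<bar> + 1) ^ card (if 2 \<le> kf f then Ef f else {}) \<le>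
            (real (kf f) powr (real (kf f) / 2) * \<bar>cph (idx f)\<bar> * (2 * cpf f) * (\<bar>B\<bar> + 1) ^ (kf f * kf f)) * real n powr (- (real (kf f) / 2))"
          by (simp add: mult_ac)
      qed
      also have "\<dots> = Cb * (\<Prod>f\<in>{0..m}. real n powr (- (real (kf f) / 2)))"
        unfolding Cb_def by (rule prod.distrib)
      also have "(\<Prod>f\<in>{0..m}. real n powr (- (real (kf f) / 2))) = real n powr (\<Sum>f\<in>{0..m}. - (real (kf f) / 2))"
        using n by (simp add: powr_sum)
      also have "(\<Sum>f\<in>{0..m}. - (real (kf f) / 2)) = - (real S / 2)"
        unfolding S_def by (simp add: sum_negf sum_divide_distrib)
      finally show ?thesis .
    qed
    define good where "good z \<longleftrightarrow> (\<forall>f\<in>{0..m}. \<forall>e\<in>Ef f. 2 \<le> kf f \<longrightarrow> (\<exists>f'\<in>{0..m}. \<exists>e'\<in>Ef f'. 2 \<le> kf f' \<and> (f', e') \<noteq> (f, e) \<and>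
        (cc (fst z) (snd z) f' (fst e'), cc (fst z) (snd z) f' (snd e')) = (cc (fst z) (snd z) f (fst e), cc (fst z) (snd z) f (snd e))))" for z
    have zero: "integral\<^sup>L (M n) (XPn (fst z) (snd z)) = 0" if z: "z \<in> CS" and ng: "\<not> good z" for z
    proof -
      obtain f0 e0 where f0: "f0 \<in> {0..m}" "e0 \<in> Ef f0" "2 \<le> kf f0"
        and H: "\<And>f' e'. f' \<in> {0..m} \<Longrightarrow> 2 \<le> kf f' \<Longrightarrow> e' \<in> Ef f' \<Longrightarrow> (f', e') \<noteq> (f0, e0) \<Longrightarrow>
          (cc (fst z) (snd z) f' (fst e'), cc (fst z) (snd z) f' (snd e')) \<noteq> (cc (fst z) (snd z) f0 (fst e0), cc (fst z) (snd z) f0 (snd e0))"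
        using ng unfolding good_def by blast
      show ?thesis unfolding XPn_def[abs_def]
        by (rule G.XP_zero'[where FI="{0..m}" and kf=kf and Ef=Ef and phf=phf and psf=psf and cf="cc (fst z) (snd z)" and cps=cpf,
              OF finI Efr cfI[OF z] psm psb f0(1) f0(3) f0(2) H]) auto
    qed
    define Cfg where "Cfg W = PiE {1..K} (\<lambda>_. W) \<times> PiE {1..m} (\<lambda>l. PiE {1..k (ii l)} (\<lambda>_. W))" for W :: "nat set"
    have f0s: "kf 0 = K" "Ef 0 = F i" "\<And>x y. cc x y 0 = x" unfolding kf_def Ef_def cc_def idx_def K_def by auto
    have fls: "\<And>l x y. l \<in> {1..m} \<Longrightarrow> kf l = k (ii l) \<and> Ef l = F (ii l) \<and> cc x y l = y l"
      unfolding kf_def Ef_def cc_def idx_def by auto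
    have goodW: "\<exists>W. W \<subseteq> {1..n} \<and> card W \<le> V0 \<and> z \<in> Cfg W" if z: "z \<in> CS" and g: "good z" for z
    proof -
      obtain a bs where zab: "z = (a, bs)" by (cases z)
      have aI: "a \<in> Iset n K" using z zab unfolding CS_def by auto
      have bsN: "\<And>l. l \<in> {1..m} \<Longrightarrow> bs l \<in> Nset n K (k (ii l)) a" using z zab unfolding CS_def by auto
      have bsI: "\<And>l. l \<in> {1..m} \<Longrightarrow> bs l \<in> Iset n (k (ii l))" using bsN unfolding Nset_def by auto
      have bsE: "bs \<in> extensional {1..m}" using z zab unfolding CS_def by (auto simp: PiE_def)
      define W where "W = a ` {1..K} \<union> (\<Union>l\<in>{1..m}. bs l ` {1..k (ii l)})"
      have gd: "\<And>f e. f \<in> {0..m} \<Longrightarrow> e \<in> Ef f \<Longrightarrow> 2 \<le> kf f \<Longrightarrow> \<exists>f'\<in>{0..m}. \<exists>e'\<in>Ef f'. 2 \<le> kf f' \<and> (f', e') \<noteq> (f, e) \<and>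
        (cc a bs f' (fst e'), cc a bs f' (snd e')) = (cc a bs f (fst e), cc a bs f (snd e))"
        using g zab unfolding good_def by auto
      have cov0: "\<exists>l\<in>{1..m}. a (fst e) \<in> bs l ` {1..k (ii l)} \<and> a (snd e) \<in> bs l ` {1..k (ii l)}"
        if e: "e \<in> F i" and K2: "2 \<le> K" for e
      proof -
        obtain f' e' where fe: "f' \<in> {0..m}" "e' \<in> Ef f'" "2 \<le> kf f'" "(f', e') \<noteq> (0, e)"
          "cc a bs f' (fst e') = a (fst e)" "cc a bs f' (snd e') = a (snd e)"
          using gd[of 0 e] e K2 f0s by auto
        show "\<exists>l\<in>{1..m}. a (fst e) \<in> bs l ` {1..k (ii l)} \<and> a (snd e) \<in> bs l ` {1..k (ii l)}"
        proof (cases "f' = 0")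
          case True
          have "e' = e"
            by (rule Iset_edge_inj[OF aI]) (use fe True Efr[of 0] e f0s in auto)
          then show ?thesis using fe True by simp
        next
          case False
          then have l: "f' \<in> {1..m}" using fe by auto
          have "e' \<in> {(v, w). 1 \<le> v \<and> v < w \<and> w \<le> k (ii f')}" using Efr[of f'] fe fls[OF l] by auto
          then have "fst e' \<in> {1..k (ii f')}" "snd e' \<in> {1..k (ii f')}" by auto
          then show ?thesis using l fe fls[OF l] by (metis image_eqI)
        qed
      qed
      have covl: "(bs l (fst e) \<in> a ` {1..K} \<and> bs l (snd e) \<in> a ` {1..K}) \<or>
          (\<exists>l'\<in>{1..m}. l' \<noteq> l \<and> bs l (fst e) \<in> bs l' ` {1..k (ii l')} \<and> bs l (snd e) \<in> bs l' ` {1..k (ii l')})"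
        if l: "l \<in> {1..m}" and e: "e \<in> F (ii l)" and k2: "2 \<le> k (ii l)" for l e
      proof -
        have l0: "l \<in> {0..m}" using l by auto
        obtain f' e' where fe: "f' \<in> {0..m}" "e' \<in> Ef f'" "2 \<le> kf f'" "(f', e') \<noteq> (l, e)"
          "cc a bs f' (fst e') = bs l (fst e)" "cc a bs f' (snd e') = bs l (snd e)"
          using gd[OF l0, of e] e k2 fls[OF l] by auto
        show "(bs l (fst e) \<in> a ` {1..K} \<and> bs l (snd e) \<in> a ` {1..K}) \<or>
          (\<exists>l'\<in>{1..m}. l' \<noteq> l \<and> bs l (fst e) \<in> bs l' ` {1..k (ii l')} \<and> bs l (snd e) \<in> bs l' ` {1..k (ii l')})"
        proof (cases "f' = 0")
          case True
          have "e' \<in> {(v, w). 1 \<le> v \<and> v < w \<and> w \<le> K}" using Efr[of 0] fe True f0s by auto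
          then have "fst e' \<in> {1..K}" "snd e' \<in> {1..K}" by auto
          then show ?thesis using fe True f0s by (metis image_eqI)
        next
          case False
          then have l': "f' \<in> {1..m}" using fe by auto
          have e'r: "e' \<in> {(v, w). 1 \<le> v \<and> v < w \<and> w \<le> k (ii f')}" using Efr[of f'] fe fls[OF l'] by auto
          show ?thesis
          proof (cases "f' = l")
            case True
            have "e' = e"
              by (rule Iset_edge_inj[OF bsI[OF l]]) (use fe True e'r Efr[OF l0] fls[OF l] e in auto)
            then show ?thesis using fe True by simp
          next
            case False
            have "fst e' \<in> {1..k (ii f')}" "snd e' \<in> {1..k (ii f')}" using e'r by auto
            then show ?thesis using False l' fe fls[OF l'] by (metis image_eqI)
          qed
        qed
      qed
      have m1: "1 \<le> m" using m by simp
      have K1: "1 \<le> K" unfolding K_def using k i by blast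
      have c0: "connected_graph_on K (F i)" unfolding K_def using F i by blast
      have cl: "\<And>l. l \<in> {1..m} \<Longrightarrow> connected_graph_on (k (ii l)) (F (ii l))" using F ii by blast
      have cw: "2 * card W + m \<le> K + (\<Sum>l\<in>{1..m}. k (ii l)) + 1"
        unfolding W_def by (rule comb[OF m1 K1 aI c0 cl bsN cov0 covl])
      have "2 * card W \<le> S + 1 - m" using cw S_eq K_def by simp
      then have cV: "card W \<le> V0" unfolding V0_def by simp
      have Wn: "W \<subseteq> {1..n}" unfolding W_def using G.Iset_range[OF aI] G.Iset_range[OF bsI] by auto
      have "z \<in> Cfg W"
      proof -
        have "a \<in> PiE {1..K} (\<lambda>_. W)" using aI unfolding W_def Iset_def by (auto simp: PiE_iff)
        moreover have "bs \<in> PiE {1..m} (\<lambda>l. PiE {1..k (ii l)} (\<lambda>_. W))"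
        proof -
          have bl: "\<forall>l\<in>{1..m}. bs l \<in> PiE {1..k (ii l)} (\<lambda>_. W)"
          proof
            fix l assume l: "l \<in> {1..m}"
            show "bs l \<in> PiE {1..k (ii l)} (\<lambda>_. W)" using bsI[OF l] l unfolding W_def Iset_def by (auto simp: PiE_iff)
          qed
          show ?thesis using bl bsE unfolding PiE_iff[of bs] by blast
        qed
        ultimately show ?thesis unfolding Cfg_def zab by simp
      qed
      then show ?thesis using cV Wn by blast
    qed
    define WW where "WW = {W. W \<subseteq> {1..n} \<and> card W \<le> V0}"
    have finWW: "finite WW" unfolding WW_def by (rule finite_subset[of _ "Pow {1..n}"]) auto
    have finCfg: "\<And>W. W \<in> WW \<Longrightarrow> finite (Cfg W)"
    proof -
      fix W assume "W \<in> WW"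
      then have "finite W" unfolding WW_def using finite_subset by blast
      then show "finite (Cfg W)" unfolding Cfg_def by (intro finite_cartesian_product finite_PiE) auto
    qed
    have cardCG: "card {z\<in>CS. good z} \<le> (V0 + 1) * n ^ V0 * V0 ^ S"
    proof -
      have sub: "{z\<in>CS. good z} \<subseteq> (\<Union>W\<in>WW. Cfg W)" using goodW unfolding WW_def by blast
      have "card {z\<in>CS. good z} \<le> card (\<Union>W\<in>WW. Cfg W)"
        by (rule card_mono[OF _ sub]) (use finWW finCfg in auto)
      also have "\<dots> \<le> (\<Sum>W\<in>WW. card (Cfg W))" by (rule card_UN_le[OF finWW])
      also have "\<dots> \<le> (\<Sum>W\<in>WW. V0 ^ S)"
      proof (rule sum_mono)
        fix W assume W: "W \<in> WW"
        then have fW: "finite W" unfolding WW_def using finite_subset by blast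
        have "card (Cfg W) = card W ^ (K + (\<Sum>l\<in>{1..m}. k (ii l)))"
          unfolding Cfg_def by (rule card_Cfg[OF fW])
        also have "\<dots> = card W ^ S" using S_eq K_def by simp
        also have "\<dots> \<le> V0 ^ S" using W unfolding WW_def by (intro power_mono) auto
        finally show "card (Cfg W) \<le> V0 ^ S" .
      qed
      also have "\<dots> = card WW * V0 ^ S" by simp
      also have "\<dots> \<le> ((V0 + 1) * n ^ V0) * V0 ^ S"
        unfolding WW_def by (intro mult_right_mono card_small_subsets n) simp
      finally show ?thesis .
    qed
    have finIset: "\<And>kk. finite (Iset n kk)"
    proof -
      fix kk show "finite (Iset n kk)"
        by (rule finite_subset[of _ "PiE {1..kk} (\<lambda>_. {1..n})"]) (auto simp: Iset_def intro: finite_PiE)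
    qed
    have finP: "\<And>a. finite (PiE {1..m} (\<lambda>l. Nset n K (k (ii l)) a))"
      by (rule finite_PiE) (auto intro: finite_subset[OF _ finIset] simp: Nset_def)
    have finCS: "finite CS" unfolding CS_def using finIset finP by auto
    have "(\<integral>\<omega>. (\<Sum>a\<in>Iset n (k i). \<Sum>bs\<in>PiE {1..m} (\<lambda>l. Nset n (k i) (k (ii l)) a).
        Xterm (M n) n (k i) (F i) (\<phi> i) (\<psi> i) \<kappa> (U n) (Y n) a \<omega> *
        (\<Prod>l\<in>{1..m}. Xterm (M n) n (k (ii l)) (F (ii l)) (\<phi> (ii l)) (\<psi> (ii l)) \<kappa> (U n) (Y n) (bs l) \<omega>)) \<partial>(M n))
      = (\<integral>\<omega>. (\<Sum>a\<in>Iset n K. \<Sum>bs\<in>PiE {1..m} (\<lambda>l. Nset n K (k (ii l)) a). XPn a bs \<omega>) \<partial>(M n))"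
      unfolding prod_eq K_def ..
    also have "\<dots> = (\<Sum>a\<in>Iset n K. \<Sum>bs\<in>PiE {1..m} (\<lambda>l. Nset n K (k (ii l)) a). integral\<^sup>L (M n) (XPn a bs))"
    proof -
      have "\<And>a bs. a \<in> Iset n K \<Longrightarrow> bs \<in> PiE {1..m} (\<lambda>l. Nset n K (k (ii l)) a) \<Longrightarrow> integrable (M n) (XPn a bs)"
        using int unfolding CS_def by fastforce
      then show ?thesis by (simp add: Bochner_Integration.integral_sum)
    qed
    also have "\<dots> = (\<Sum>z\<in>CS. integral\<^sup>L (M n) (XPn (fst z) (snd z)))"
      unfolding CS_def using finIset finP by (subst sum.Sigma) (auto simp: split_beta)
    finally have eqI: "(\<integral>\<omega>. (\<Sum>a\<in>Iset n (k i). \<Sum>bs\<in>PiE {1..m} (\<lambda>l. Nset n (k i) (k (ii l)) a).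
        Xterm (M n) n (k i) (F i) (\<phi> i) (\<psi> i) \<kappa> (U n) (Y n) a \<omega> *
        (\<Prod>l\<in>{1..m}. Xterm (M n) n (k (ii l)) (F (ii l)) (\<phi> (ii l)) (\<psi> (ii l)) \<kappa> (U n) (Y n) (bs l) \<omega>)) \<partial>(M n))
      = (\<Sum>z\<in>CS. integral\<^sup>L (M n) (XPn (fst z) (snd z)))" .
    define c1 where "c1 = Cb * real n powr (- (real S / 2))"
    have c10: "0 \<le> c1" unfolding c1_def using Cb0 by simp
    have "\<bar>\<Sum>z\<in>CS. integral\<^sup>L (M n) (XPn (fst z) (snd z))\<bar> \<le> (\<Sum>z\<in>CS. \<bar>integral\<^sup>L (M n) (XPn (fst z) (snd z))\<bar>)"
      by (rule sum_abs)
    also have "\<dots> \<le> (\<Sum>z\<in>CS. if good z then c1 else 0)"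
      by (rule sum_mono) (use bnd2 zero in \<open>auto simp: c1_def\<close>)
    also have "\<dots> = real (card {z\<in>CS. good z}) * c1"
    proof -
      have "CS \<inter> Collect good = {z\<in>CS. good z}" by auto
      then show ?thesis using finCS by (simp add: sum.If_cases)
    qed
    also have "\<dots> \<le> real ((V0 + 1) * n ^ V0 * V0 ^ S) * c1"
    proof (rule mult_right_mono[OF _ c10])
      show "real (card {z\<in>CS. good z}) \<le> real ((V0 + 1) * n ^ V0 * V0 ^ S)"
        using cardCG by (simp only: of_nat_le_iff)
    qed
    also have "\<dots> = C0 * (real n ^ V0 * real n powr (- (real S / 2)))"
      unfolding C0_def c1_def by (simp add: algebra_simps)
    also have "\<dots> \<le> C0 * real n powr (- (real m - 1) / 2)"
    proof (rule mult_left_mono[OF _ C00])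
      have "real n ^ V0 * real n powr (- (real S / 2)) = real n powr (real V0 - real S / 2)"
        using n by (simp add: powr_realpow[symmetric] powr_add[symmetric])
      also have "\<dots> \<le> real n powr (- (real m - 1) / 2)"
      proof (rule powr_mono)
        have "S \<ge> m"
        proof -
          have "(\<Sum>l\<in>{1..m}. 1) \<le> (\<Sum>l\<in>{1..m}. k (ii l))" using k ii by (intro sum_mono) blast
          then show ?thesis using S_eq by simp
        qed
        moreover have "2 * V0 \<le> S + 1 - m" unfolding V0_def by simp
        ultimately have "2 * real V0 \<le> real S + 1 - real m" by linarith
        then show "real V0 - real S / 2 \<le> - (real m - 1) / 2" by simp
      qed (use n in simp)
      finally show "real n ^ V0 * real n powr (- (real S / 2)) \<le> real n powr (- (real m - 1) / 2)" .
    qed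
    finally show ?thesis using eqI by simp
  qed
  show ?thesis
  proof (intro exI[of _ "C0 + 1"] conjI allI impI)
    show "0 < C0 + 1" using C00 by simp
    fix n :: nat assume n: "1 \<le> n"
    have "C0 * real n powr (- (real m - 1) / 2) \<le> (C0 + 1) * real n powr (- (real m - 1) / 2)"
      by (intro mult_right_mono) auto
    then show "\<bar>\<integral>\<omega>. (\<Sum>a\<in>Iset n (k i). \<Sum>bs\<in>PiE {1..m} (\<lambda>l. Nset n (k i) (k (ii l)) a).
        Xterm (M n) n (k i) (F i) (\<phi> i) (\<psi> i) \<kappa> (U n) (Y n) a \<omega> *
        (\<Prod>l\<in>{1..m}. Xterm (M n) n (k (ii l)) (F (ii l)) (\<phi> (ii l)) (\<psi> (ii l)) \<kappa> (U n) (Y n) (bs l) \<omega>))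
      \<partial>(M n)\<bar> \<le> (C0 + 1) * real n powr (- (real m - 1) / 2)"
      using key[OF n] by linarith
  qed
qed


end
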